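(* Let $T_W$ be a well-localized operator of radius $r$ acting formally from $L^2(W)$ to $L^2(V)$, and let $\Pi^W$ be the associated paraproduct. Let $I,J\in\mathcal{D}$ and $1\le i,j\le d$. (1) If $|J|\ge2^{-r}|I|$, then $\langle\Pi^Wh_I^{W,i},h_J^{V,j}\rangle_{L^2(V)}=0$. (2) If $|J|<2^{-r}|I|$, then $\langle\Pi^Wh_I^{W,i},h_J^{V,j}\rangle_{L^2(V)}=\langle T_Wh_I^{W,i},h_J^{V,j}\rangle_{L^2(V)}$; moreover if in addition $J\not\subset I$, both sides are zero. The analogous statements hold for $\Pi^V$ with $T_V^*$ in place of $T_W$ (roles of $V$ and $W$ exchanged).
   Context: Matrix weights $V,W$ (positive definite a.e., locally integrable entries), $L^2(W)$ with inner product $\int\langle Wf,g\rangle$, $W(I)=\int_IW$, $\langle W\rangle_I=W(I)/|I|$, $\mathcal{D}$ the standard dyadic grid, $I_\pm$ halves, $I^{(k)}$ the $k$-th ancestor. Weighted Haar functions: $v_J^1,\dots,v_J^d$ an orthonormal eigenbasis of the positive definite matrix $W(J)W(J_+)^{-1}W(J_-)$, $w_J^j=\|(W(J)W(J_+)^{-1}W(J_-))^{1/2}v_J^j\|$, $h_J^{W,j}=(w_J^j)^{-1}(W(J_+)^{-1}W(J_-)v_J^j\mathbf{1}_{J_+}-v_J^j\mathbf{1}_{J_-})$; same for $V$. Weighted expectation: $E_I^Wf=\langle W\rangle_I^{-1}\langle Wf\rangle_I\mathbf{1}_I$ where $\langle Wf\rangle_I=\frac1{|I|}\int_IWf$. Paraproducts: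 $\Pi^Wf=\sum_{I\in\mathcal{D}}\sum_{1\le j\le d}\sum_{J\subseteq I,|J|=2^{-r}|I|}\langle T_WE^W_If,h_J^{V,j}\rangle_{L^2(V)}h_J^{V,j}$ and $\Pi^Vg=\sum_{I}\sum_{j}\sum_{J\subseteq I,|J|=2^{-r}|I|}\langle T_V^*E^V_Ig,h_J^{W,j}\rangle_{L^2(W)}h_J^{W,j}$. $T_W$ acts formally from $L^2(W)$ to $L^2(V)$ if $\langle T_W\mathbf{1}_Ie,\mathbf{1}_Jv\rangle_{L^2(V)}$ is given for all dyadic $I,J$ and vectors (extended linearly); formal adjoint: $\langle T_V^*\mathbf{1}_Ie,\mathbf{1}_Jv\rangle_{L^2(W)}=\langle\mathbf{1}_Ie,T_W\mathbf{1}_Jv\rangle_{L^2(V)}$. $T_W$ is $r$-lower triangular if for $|J|\le2|I|$, $\langle T_W\mathbf{1}_Ie,h_J^{V,j}\rangle_{L^2(V)}=0$ whenever $J\not\subset I^{(r+1)}$, or $|J|\le2^{-r}|I|$ and $J\not\subset I$; well-localized with radius $r$ means $T_W$ and $T_V^*$ are both $r$-lower triangular. *)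

theory Defs
  imports "HOL-Analysis.Analysis"
begin

definition dyadic :: "real set set" where
  "dyadic = {{real_of_int k * 2 powr real_of_int n ..< (real_of_int k + 1) * 2 powr real_of_int n}
             | k n. True}"

definition dleft :: "real set \<Rightarrow> real set" where
  "dleft I = {Inf I ..< (Inf I + Sup I) / 2}"

definition dright :: "real set \<Rightarrow> real set" where
  "dright I = {(Inf I + Sup I) / 2 ..< Sup I}"

definition dlen :: "real set \<Rightarrow> real" where
  "dlen I = measure lborel I"

definition anc :: "nat \<Rightarrow> real set \<Rightarrow> real set" where
  "anc k I = (THE J. J \<in> dyadic \<and> I \<subseteq> J \<and> dlen J = 2 ^ k * dlen I)"

definition cinner :: "complex ^ 'n \<Rightarrow> complex ^ 'n \<Rightarrow> complex" where
  "cinner x y = (\<Sum>i\<in>UNIV. x $ i * cnj (y $ i))"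

definition hermitian :: "complex ^ 'n ^ 'n \<Rightarrow> bool" where
  "hermitian A \<longleftrightarrow> (\<forall>i j. A $ i $ j = cnj (A $ j $ i))"

definition posdef :: "complex ^ 'n ^ 'n \<Rightarrow> bool" where
  "posdef A \<longleftrightarrow> hermitian A \<and> (\<forall>x. x \<noteq> 0 \<longrightarrow> Re (cinner (A *v x) x) > 0)"

definition matrix_weight :: "(real \<Rightarrow> complex ^ 'n ^ 'n) \<Rightarrow> bool" where
  "matrix_weight W \<longleftrightarrow> (AE x in lborel. posdef (W x)) \<and>
     (\<forall>i j. \<forall>a b. set_integrable lborel {a..b} (\<lambda>x. W x $ i $ j))"

definition mint :: "(real \<Rightarrow> complex ^ 'n ^ 'n) \<Rightarrow> real set \<Rightarrow> complex ^ 'n ^ 'n" where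
  "mint W I = (\<chi> i j. LINT x:I|lborel. W x $ i $ j)"

definition mavg :: "(real \<Rightarrow> complex ^ 'n ^ 'n) \<Rightarrow> real set \<Rightarrow> complex ^ 'n ^ 'n" where
  "mavg W I = (\<chi> i j. complex_of_real (1 / dlen I) * mint W I $ i $ j)"

definition vavg :: "(real \<Rightarrow> complex ^ 'n ^ 'n) \<Rightarrow> (real \<Rightarrow> complex ^ 'n) \<Rightarrow> real set \<Rightarrow> complex ^ 'n" where
  "vavg W f I = (\<chi> i. complex_of_real (1 / dlen I) * (LINT x:I|lborel. (W x *v f x) $ i))"

definition l2ip :: "(real \<Rightarrow> complex ^ 'n ^ 'n) \<Rightarrow> (real \<Rightarrow> complex ^ 'n) \<Rightarrow> (real \<Rightarrow> complex ^ 'n) \<Rightarrow> complex" where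
  "l2ip W f g = (LINT x|lborel. cinner (W x *v f x) (g x))"

definition step_fun :: "(real set \<times> (complex ^ 'n)) list \<Rightarrow> real \<Rightarrow> complex ^ 'n" where
  "step_fun R x = sum_list (map (\<lambda>(I, e). (indicator I x :: complex) *s e) R)"

definition haar_mat :: "(real \<Rightarrow> complex ^ 'n ^ 'n) \<Rightarrow> real set \<Rightarrow> complex ^ 'n ^ 'n" where
  "haar_mat W J = mint W J ** matrix_inv (mint W (dright J)) ** mint W (dleft J)"

definition eigbasis :: "(real \<Rightarrow> complex ^ 'n ^ 'n) \<Rightarrow> (real set \<Rightarrow> 'n \<Rightarrow> complex ^ 'n) \<Rightarrow> bool" where
  "eigbasis W eb \<longleftrightarrow> (\<forall>J\<in>dyadic.
     (\<forall>i j. cinner (eb J i) (eb J j) = (if i = j then 1 else 0)) \<and>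
     (\<forall>j. \<exists>c. haar_mat W J *v eb J j = c *s eb J j))"

text \<open>w_J^j = || M^{1/2} v || = <M v, v>^{1/2} for the positive definite matrix M = haar_mat W J.\<close>
definition haar_norm :: "(real \<Rightarrow> complex ^ 'n ^ 'n) \<Rightarrow> (real set \<Rightarrow> 'n \<Rightarrow> complex ^ 'n) \<Rightarrow> real set \<Rightarrow> 'n \<Rightarrow> real" where
  "haar_norm W eb J j = sqrt (Re (cinner (haar_mat W J *v eb J j) (eb J j)))"

definition haar_rep :: "(real \<Rightarrow> complex ^ 'n ^ 'n) \<Rightarrow> (real set \<Rightarrow> 'n \<Rightarrow> complex ^ 'n) \<Rightarrow> real set \<Rightarrow> 'n \<Rightarrow> (real set \<times> (complex ^ 'n)) list" where
  "haar_rep W eb J j =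
     [(dright J, complex_of_real (1 / haar_norm W eb J j) *s
                 ((matrix_inv (mint W (dright J)) ** mint W (dleft J)) *v eb J j)),
      (dleft J, complex_of_real (- 1 / haar_norm W eb J j) *s eb J j)]"

definition haar :: "(real \<Rightarrow> complex ^ 'n ^ 'n) \<Rightarrow> (real set \<Rightarrow> 'n \<Rightarrow> complex ^ 'n) \<Rightarrow> real set \<Rightarrow> 'n \<Rightarrow> real \<Rightarrow> complex ^ 'n" where
  "haar W eb J j = step_fun (haar_rep W eb J j)"

definition wexp_rep :: "(real \<Rightarrow> complex ^ 'n ^ 'n) \<Rightarrow> real set \<Rightarrow> (real \<Rightarrow> complex ^ 'n) \<Rightarrow> (real set \<times> (complex ^ 'n)) list" where
  "wexp_rep W I f = [(I, matrix_inv (mavg W I) *v vavg W f I)]"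

text \<open>A formal operator T from L^2(W) to L^2(V) is given by its values
  tau I e J v = <T 1_I e, 1_J v>_{L^2(V)} for dyadic I, J, extended linearly.
  Well-definedness of the linear extension: linear in e, conjugate linear in v,
  and compatible with 1_I = 1_{I_-} + 1_{I_+} in both interval slots.\<close>
definition formal_op :: "(real set \<Rightarrow> complex ^ 'n \<Rightarrow> real set \<Rightarrow> complex ^ 'n \<Rightarrow> complex) \<Rightarrow> bool" where
  "formal_op tau \<longleftrightarrow> (\<forall>I\<in>dyadic. \<forall>J\<in>dyadic.
     (\<forall>a e e' v. tau I (a *s e + e') J v = a * tau I e J v + tau I e' J v) \<and>
     (\<forall>a e v v'. tau I e J (a *s v + v') = cnj a * tau I e J v + tau I e J v') \<and>
     (\<forall>e v. tau I e J v = tau (dleft I) e J v + tau (dright I) e J v) \<and>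
     (\<forall>e v. tau I e J v = tau I e (dleft J) v + tau I e (dright J) v))"

text \<open>Linear extension: <T (sum 1_I e), sum 1_J v>.\<close>
definition fpair :: "(real set \<Rightarrow> complex ^ 'n \<Rightarrow> real set \<Rightarrow> complex ^ 'n \<Rightarrow> complex) \<Rightarrow>
    (real set \<times> (complex ^ 'n)) list \<Rightarrow> (real set \<times> (complex ^ 'n)) list \<Rightarrow> complex" where
  "fpair tau R S = sum_list (map (\<lambda>(I, e). sum_list (map (\<lambda>(J, v). tau I e J v) S)) R)"

text \<open>Formal adjoint: <T^* 1_I e, 1_J v>_{L^2(W)} = <1_I e, T 1_J v>_{L^2(V)}.\<close>
definition fadj :: "(real set \<Rightarrow> complex ^ 'n \<Rightarrow> real set \<Rightarrow> complex ^ 'n \<Rightarrow> complex) \<Rightarrow>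
    (real set \<Rightarrow> complex ^ 'n \<Rightarrow> real set \<Rightarrow> complex ^ 'n \<Rightarrow> complex)" where
  "fadj tau I e J v = cnj (tau J v I e)"

definition lower_tri :: "nat \<Rightarrow> (real set \<Rightarrow> complex ^ 'n \<Rightarrow> real set \<Rightarrow> complex ^ 'n \<Rightarrow> complex) \<Rightarrow>
    (real \<Rightarrow> complex ^ 'n ^ 'n) \<Rightarrow> (real set \<Rightarrow> 'n \<Rightarrow> complex ^ 'n) \<Rightarrow> bool" where
  "lower_tri r tau B ebB \<longleftrightarrow> (\<forall>I\<in>dyadic. \<forall>J\<in>dyadic. \<forall>e j.
     dlen J \<le> 2 * dlen I \<longrightarrow>
     (\<not> J \<subseteq> anc (r + 1) I \<or> (dlen J \<le> dlen I / 2 ^ r \<and> \<not> J \<subseteq> I)) \<longrightarrow>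
     fpair tau [(I, e)] (haar_rep B ebB J j) = 0)"

definition well_localized :: "nat \<Rightarrow> (real set \<Rightarrow> complex ^ 'n \<Rightarrow> real set \<Rightarrow> complex ^ 'n \<Rightarrow> complex) \<Rightarrow>
    (real \<Rightarrow> complex ^ 'n ^ 'n) \<Rightarrow> (real set \<Rightarrow> 'n \<Rightarrow> complex ^ 'n) \<Rightarrow>
    (real \<Rightarrow> complex ^ 'n ^ 'n) \<Rightarrow> (real set \<Rightarrow> 'n \<Rightarrow> complex ^ 'n) \<Rightarrow> bool" where
  "well_localized r tau W ebW V ebV \<longleftrightarrow> lower_tri r tau V ebV \<and> lower_tri r (fadj tau) W ebW"

text \<open>For an operator Sg from L^2(A) to L^2(B), the paraproduct
  Pi f = sum_{I} sum_{j} sum_{J subset I, |J| = 2^{-r}|I|} <Sg E_I^A f, h_J^{B,j}> h_J^{B,j}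
  is a formal Haar series; para_pair gives <Pi f, h_J^{B,j}>_{L^2(B)} by pairing termwise.\<close>
definition para_pair :: "nat \<Rightarrow> (real set \<Rightarrow> complex ^ 'n \<Rightarrow> real set \<Rightarrow> complex ^ 'n \<Rightarrow> complex) \<Rightarrow>
    (real \<Rightarrow> complex ^ 'n ^ 'n) \<Rightarrow> (real \<Rightarrow> complex ^ 'n ^ 'n) \<Rightarrow> (real set \<Rightarrow> 'n \<Rightarrow> complex ^ 'n) \<Rightarrow>
    (real \<Rightarrow> complex ^ 'n) \<Rightarrow> real set \<Rightarrow> 'n \<Rightarrow> complex" where
  "para_pair r Sg A B ebB f J j =
     infsum (\<lambda>(I', j', J'). fpair Sg (wexp_rep A I' f) (haar_rep B ebB J' j') *
                            l2ip B (haar B ebB J' j') (haar B ebB J j))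
       {(I', j', J'). I' \<in> dyadic \<and> J' \<in> dyadic \<and> J' \<subseteq> I' \<and> dlen J' = dlen I' / 2 ^ r}"

end

theory Submission
  imports Defs
begin


definition dint :: "int \<Rightarrow> int \<Rightarrow> real set" where
  "dint k n = {real_of_int k * 2 powr real_of_int n ..< (real_of_int k + 1) * 2 powr real_of_int n}"

lemma dyadic_iff: "I \<in> dyadic \<longleftrightarrow> (\<exists>k n. I = dint k n)"
  unfolding dyadic_def dint_def by auto

lemma dint_lt: "real_of_int k * 2 powr real_of_int n < (real_of_int k + 1) * 2 powr real_of_int n"
  by (simp add: distrib_right)

lemma dint_Inf: "Inf (dint k n) = real_of_int k * 2 powr real_of_int n"
  unfolding dint_def using dint_lt by (simp add: cInf_atLeastLessThan)
lemma dint_Sup: "Sup (dint k n) = (real_of_int k + 1) * 2 powr real_of_int n"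
  unfolding dint_def using dint_lt by (simp add: cSup_atLeastLessThan)
lemma dlen_dint: "dlen (dint k n) = 2 powr real_of_int n"
  unfolding dlen_def dint_def using dint_lt by (simp add: algebra_simps)

lemma two_powr_half: "(2::real) powr real_of_int n = 2 * 2 powr (real_of_int (n - 1))"
  by (simp add: powr_diff)

lemma dleft_dint: "dleft (dint k n) = dint (2*k) (n-1)"
proof -
  define q where "q = (2::real) powr (real_of_int (n - 1))"
  have p: "2 powr real_of_int n = 2 * q" unfolding q_def by (rule two_powr_half)
  show ?thesis unfolding dleft_def dint_Inf dint_Sup unfolding dint_def p q_def[symmetric]
    by (rule arg_cong2[where f=atLeastLessThan]) (simp_all add: field_simps)
qed

lemma dright_dint: "dright (dint k n) = dint (2*k+1) (n-1)"
proof -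
  define q where "q = (2::real) powr (real_of_int (n - 1))"
  have p: "2 powr real_of_int n = 2 * q" unfolding q_def by (rule two_powr_half)
  show ?thesis unfolding dright_def dint_Inf dint_Sup unfolding dint_def p q_def[symmetric]
    by (rule arg_cong2[where f=atLeastLessThan]) (simp_all add: field_simps)
qed

lemma dleft_dyadic: "I \<in> dyadic \<Longrightarrow> dleft I \<in> dyadic"
  using dleft_dint dyadic_iff by metis
lemma dright_dyadic: "I \<in> dyadic \<Longrightarrow> dright I \<in> dyadic"
  using dright_dint dyadic_iff by metis

lemma dint_ne: "dint k n \<noteq> {}"
  unfolding dint_def using dint_lt by auto

lemma dyadic_ne: "I \<in> dyadic \<Longrightarrow> I \<noteq> {}"
  using dint_ne dyadic_iff by metis

lemma dlen_pos: "I \<in> dyadic \<Longrightarrow> dlen I > 0"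
  using dlen_dint dyadic_iff by fastforce

lemma dyadic_sets: "I \<in> dyadic \<Longrightarrow> I \<in> sets lborel"
  using dyadic_iff dint_def by (metis atLeastLessThan_borel sets_lborel)

lemma dyadic_bounded: "I \<in> dyadic \<Longrightarrow> \<exists>a b. I \<subseteq> {a..b}"
  unfolding dyadic_iff dint_def by (meson atLeastLessThan_subseteq_atLeastAtMost_iff order_refl)

lemma halves_union: "I \<in> dyadic \<Longrightarrow> I = dleft I \<union> dright I"
proof -
  assume "I \<in> dyadic"
  then obtain k n where I: "I = dint k n" using dyadic_iff by metis
  define q where "q = (2::real) powr (real_of_int (n - 1))"
  have qp: "q > 0" unfolding q_def by simp
  have p: "2 powr real_of_int n = 2 * q" unfolding q_def by (rule two_powr_half)
  define a where "a = 2 * real_of_int k * q"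
  define b where "b = (2 * real_of_int k + 1) * q"
  define c where "c = (2 * real_of_int k + 2) * q"
  have 1: "dint k n = {a..<c}" unfolding dint_def p a_def c_def
    by (rule arg_cong2[where f=atLeastLessThan]) (simp_all add: field_simps)
  have 2: "dint (2*k) (n-1) = {a..<b}" unfolding dint_def q_def[symmetric] a_def b_def
    by (rule arg_cong2[where f=atLeastLessThan]) (simp_all add: field_simps)
  have 3: "dint (2*k+1) (n-1) = {b..<c}" unfolding dint_def q_def[symmetric] b_def c_def
    by (rule arg_cong2[where f=atLeastLessThan]) (simp_all add: field_simps)
  have "a \<le> b" "b \<le> c" unfolding a_def b_def c_def using qp by (simp_all add: field_simps)
  hence "{a..<c} = {a..<b} \<union> {b..<c}" by auto
  hence "dint k n = dint (2*k) (n-1) \<union> dint (2*k+1) (n-1)" unfolding 1 2 3 .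
  thus ?thesis unfolding I dleft_dint dright_dint .
qed

lemma halves_disj: "dleft I \<inter> dright I = {}"
  unfolding dleft_def dright_def by auto

lemma halves_sub: "I \<in> dyadic \<Longrightarrow> dleft I \<subseteq> I \<and> dright I \<subseteq> I"
  using halves_union by blast

lemma dlen_halves: "I \<in> dyadic \<Longrightarrow> dlen (dleft I) = dlen I / 2 \<and> dlen (dright I) = dlen I / 2"
  unfolding dyadic_iff using dleft_dint dright_dint dlen_dint
  by (auto simp: powr_diff)

lemma nest_int:
  fixes k k' :: int and m :: nat and y :: real
  assumes "k \<le> y" "y < k + 1" "k' * 2^m \<le> y" "y < (k'+1) * 2^m"
  shows "k' * 2^m \<le> k \<and> k + 1 \<le> (k'+1) * 2^m"
proof -
  have "real_of_int (k' * 2^m) < real_of_int (k+1)" using assms by simp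
  hence a: "k' * 2^m < k+1" by linarith
  have "real_of_int k < real_of_int ((k'+1) * 2^m)" using assms by simp
  hence b: "k < (k'+1) * 2^m" by linarith
  show ?thesis using a b by linarith
qed

lemma dint_nest:
  assumes "dint k n \<inter> dint k' n' \<noteq> {}" "n \<le> n'"
  shows "dint k n \<subseteq> dint k' n'"
proof -
  define m where "m = nat (n' - n)"
  define p where "p = (2::real) powr real_of_int n"
  have pp: "p > 0" unfolding p_def by simp
  have e: "(2::real) powr real_of_int n' = 2^m * p"
    unfolding p_def m_def using assms(2)
    by (simp add: powr_realpow[symmetric] powr_add[symmetric])
  obtain x where x: "x \<in> dint k n" "x \<in> dint k' n'" using assms(1) by blast
  define y where "y = x / p"
  have "k * p \<le> x" "x < (k+1) * p" "k' * 2^m * p \<le> x" "x < (k'+1) * 2^m * p"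
    using x unfolding dint_def e p_def by (auto simp: algebra_simps)
  hence "k \<le> y" "y < k+1" "k' * 2^m \<le> y" "y < (k'+1) * 2^m"
    unfolding y_def using pp by (auto simp: field_simps)
  from nest_int[OF this] have h: "k' * 2^m \<le> k" "k + 1 \<le> (k'+1) * 2^m" by auto
  have "real_of_int (k' * 2^m) \<le> real_of_int k"
    using h(1) by (simp only: of_int_le_iff)
  hence h1: "real_of_int k' * 2^m \<le> real_of_int k" by simp
  have "real_of_int (k + 1) \<le> real_of_int ((k'+1) * 2^m)"
    using h(2) by (simp only: of_int_le_iff)
  hence h2: "real_of_int k + 1 \<le> (real_of_int k'+1) * 2^m" by simp
  show ?thesis
  proof
    fix z assume "z \<in> dint k n"
    hence z: "real_of_int k * p \<le> z" "z < (real_of_int k+1) * p" unfolding dint_def p_def by auto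
    have "real_of_int k' * (2^m * p) = (real_of_int k' * 2^m) * p" by (simp only: mult.assoc)
    also have "\<dots> \<le> real_of_int k * p" using h1 less_imp_le[OF pp] by (rule mult_right_mono)
    also have "\<dots> \<le> z" using z(1) .
    finally have A: "real_of_int k' * (2^m * p) \<le> z" .
    have "z < (real_of_int k+1) * p" using z(2) .
    also have "\<dots> \<le> ((real_of_int k'+1) * 2^m) * p" using h2 less_imp_le[OF pp] by (rule mult_right_mono)
    also have "\<dots> = (real_of_int k'+1) * (2^m * p)" by (simp only: mult.assoc)
    finally have B: "z < (real_of_int k'+1) * (2^m * p)" .
    show "z \<in> dint k' n'" unfolding dint_def e using A B by simp
  qed
qed

lemma dyadic_nest:
  assumes "I \<in> dyadic" "J \<in> dyadic" "I \<inter> J \<noteq> {}" "dlen I \<le> dlen J"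
  shows "I \<subseteq> J"
proof -
  obtain k n k' n' where "I = dint k n" "J = dint k' n'" using assms dyadic_iff by metis
  moreover have "n \<le> n'" using assms(4) unfolding calculation dlen_dint by simp
  ultimately show ?thesis using dint_nest assms(3) by blast
qed

lemma dyadic_fmeas: "J \<in> dyadic \<Longrightarrow> J \<in> fmeasurable lborel"
  unfolding dyadic_iff dint_def fmeasurable_def by auto

lemma dlen_mono: "I \<subseteq> J \<Longrightarrow> J \<in> dyadic \<Longrightarrow> I \<in> sets lborel \<Longrightarrow> dlen I \<le> dlen J"
  unfolding dlen_def using dyadic_fmeas measure_mono_fmeasurable by blast



lemma dlen_lt2: "I \<in> dyadic \<Longrightarrow> J \<in> dyadic \<Longrightarrow> dlen J < dlen I \<Longrightarrow> 2 * dlen J \<le> dlen I"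
proof -
  assume "I \<in> dyadic" "J \<in> dyadic" "dlen J < dlen I"
  then obtain k n k' n' where I: "I = dint k n" and J: "J = dint k' n'" and
     lt: "(2::real) powr real_of_int n' < 2 powr real_of_int n"
    using dyadic_iff dlen_dint by metis
  have "n' < n" using lt by simp
  hence "real_of_int n' + 1 \<le> real_of_int n" by linarith
  hence "(2::real) powr (real_of_int n' + 1) \<le> 2 powr real_of_int n" by simp
  thus ?thesis unfolding I J dlen_dint by (simp add: powr_add)
qed

lemma dyadic_eq: "I \<in> dyadic \<Longrightarrow> J \<in> dyadic \<Longrightarrow> I \<subseteq> J \<Longrightarrow> dlen I = dlen J \<Longrightarrow> I = J"
proof -
  assume a: "I \<in> dyadic" "J \<in> dyadic" "I \<subseteq> J" "dlen I = dlen J"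
  have "I \<noteq> {}" using a(1) by (rule dyadic_ne)
  hence "J \<inter> I \<noteq> {}" using a(3) by blast
  hence "J \<subseteq> I" by (rule dyadic_nest[OF a(2) a(1)]) (simp add: a(4))
  thus ?thesis using a(3) by blast
qed

lemma sub_half:
  assumes "K \<in> dyadic" "I \<in> dyadic" "K \<subseteq> I" "K \<noteq> I"
  shows "K \<subseteq> dleft I \<or> K \<subseteq> dright I"
proof -
  have "dlen K \<le> dlen I" using assms dlen_mono dyadic_sets by blast
  moreover have "dlen K \<noteq> dlen I" using dyadic_eq assms by blast
  ultimately have "2 * dlen K \<le> dlen I" using dlen_lt2 assms by simp
  hence le: "dlen K \<le> dlen (dleft I)" "dlen K \<le> dlen (dright I)" using dlen_halves[OF assms(2)] by auto
  have "K \<inter> dleft I \<noteq> {} \<or> K \<inter> dright I \<noteq> {}"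
    using dyadic_ne[OF assms(1)] assms(3) halves_union[OF assms(2)] by blast
  thus ?thesis
  proof
    assume "K \<inter> dleft I \<noteq> {}"
    hence "K \<subseteq> dleft I" by (rule dyadic_nest[OF assms(1) dleft_dyadic[OF assms(2)] _ le(1)])
    thus ?thesis ..
  next
    assume "K \<inter> dright I \<noteq> {}"
    hence "K \<subseteq> dright I" by (rule dyadic_nest[OF assms(1) dright_dyadic[OF assms(2)] _ le(2)])
    thus ?thesis ..
  qed
qed

lemma exists_len:
  assumes "I \<in> dyadic" "J \<in> dyadic" "I \<subseteq> J"
  shows "\<exists>m::nat. dlen J = 2^m * dlen I"
proof -
  obtain k n k' n' where I: "I = dint k n" and J: "J = dint k' n'"
    using assms dyadic_iff by metis
  have "dlen I \<le> dlen J" using assms dlen_mono dyadic_sets by blast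
  hence "n \<le> n'" unfolding I J dlen_dint by simp
  define m where "m = nat (n' - n)"
  have e: "real_of_int n' = real_of_int n + real m" unfolding m_def using \<open>n \<le> n'\<close> by simp
  have "(2::real) powr real_of_int n' = 2 powr (real_of_int n + real m)" by (simp only: e)
  also have "\<dots> = 2 ^ m * 2 powr real_of_int n" by (simp add: powr_add powr_realpow)
  finally show ?thesis unfolding I J dlen_dint by blast
qed

lemma anc_exists:
  assumes "I \<in> dyadic"
  shows "\<exists>J. J \<in> dyadic \<and> I \<subseteq> J \<and> dlen J = 2 ^ k * dlen I"
proof -
  obtain k0 n where I: "I = dint k0 n" using assms dyadic_iff by metis
  define k' where "k' = k0 div 2^k"
  have dm: "k' * 2^k + k0 mod 2^k = k0" unfolding k'_def by (rule div_mult_mod_eq)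
  have m1: "k0 mod 2^k < 2^k" by simp
  have m2: "0 \<le> k0 mod 2^k" by simp
  have a1': "k' * 2^k \<le> k0" using dm m2 by linarith
  have a2': "k0 < k' * 2^k + 2^k" using dm m1 by linarith
  have a: "k' * 2^k \<le> k0" "k0 < (k'+1) * 2^k" using a1' a2' by (simp_all add: distrib_right)
  have "real_of_int (k' * 2^k) \<le> real_of_int k0" using a(1) by (simp only: of_int_le_iff)
  hence a1: "real_of_int k' * 2^k \<le> real_of_int k0" by simp
  have "real_of_int k0 + 1 \<le> real_of_int ((k'+1) * 2^k)" using a(2) by (simp only: of_int_le_iff[symmetric])
  hence a2: "real_of_int k0 + 1 \<le> (real_of_int k'+1) * 2^k" by simp
  define p where "p = (2::real) powr real_of_int n"
  have pp: "p > 0" unfolding p_def by simp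
  have e: "(2::real) powr real_of_int (n + int k) = 2^k * p"
    unfolding p_def by (simp add: powr_add powr_realpow)
  define J where "J = dint k' (n + int k)"
  have x: "real_of_int k0 * p \<in> J"
  proof -
    have "real_of_int k' * (2^k * p) = (real_of_int k' * 2^k) * p" by (simp only: mult.assoc)
    also have "\<dots> \<le> real_of_int k0 * p" using a1 less_imp_le[OF pp] by (rule mult_right_mono)
    finally have A: "real_of_int k' * (2^k * p) \<le> real_of_int k0 * p" .
    have "real_of_int k0 * p < (real_of_int k0 + 1) * p" using pp by (simp add: algebra_simps)
    also have "\<dots> \<le> ((real_of_int k'+1) * 2^k) * p" using a2 less_imp_le[OF pp] by (rule mult_right_mono)
    also have "\<dots> = (real_of_int k'+1) * (2^k * p)" by (simp only: mult.assoc)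
    finally have B: "real_of_int k0 * p < (real_of_int k'+1) * (2^k * p)" .
    show ?thesis unfolding J_def dint_def e using A B by simp
  qed
  have xI: "real_of_int k0 * p \<in> I" unfolding I dint_def p_def using dint_lt by simp
  have "dint k0 n \<inter> dint k' (n + int k) \<noteq> {}" using x xI unfolding I J_def by blast
  hence "I \<subseteq> J" unfolding I J_def by (rule dint_nest) simp
  moreover have "dlen J = 2^k * dlen I" unfolding J_def I dlen_dint e p_def ..
  moreover have "J \<in> dyadic" unfolding J_def dyadic_iff by blast
  ultimately show ?thesis by blast
qed

lemma anc_unique:
  assumes "I \<in> dyadic" "J1 \<in> dyadic" "I \<subseteq> J1" "dlen J1 = 2^k * dlen I"
    "J2 \<in> dyadic" "I \<subseteq> J2" "dlen J2 = 2^k * dlen I"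
  shows "J1 = J2"
proof -
  have "I \<noteq> {}" using assms(1) by (rule dyadic_ne)
  hence ne: "J1 \<inter> J2 \<noteq> {}" "J2 \<inter> J1 \<noteq> {}" using assms(3,6) by blast+
  have "J1 \<subseteq> J2" by (rule dyadic_nest[OF assms(2) assms(5) ne(1)]) (simp add: assms(4,7))
  moreover have "J2 \<subseteq> J1" by (rule dyadic_nest[OF assms(5) assms(2) ne(2)]) (simp add: assms(4,7))
  ultimately show ?thesis by blast
qed

lemma anc_props:
  assumes "I \<in> dyadic"
  shows "anc k I \<in> dyadic \<and> I \<subseteq> anc k I \<and> dlen (anc k I) = 2 ^ k * dlen I"
proof -
  obtain J where J: "J \<in> dyadic \<and> I \<subseteq> J \<and> dlen J = 2 ^ k * dlen I" using anc_exists assms by blast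
  have "\<exists>!J. J \<in> dyadic \<and> I \<subseteq> J \<and> dlen J = 2 ^ k * dlen I"
    using J anc_unique[OF assms] by blast
  thus ?thesis unfolding anc_def by (rule theI')
qed

lemma anc_eq:
  assumes "I \<in> dyadic" "J \<in> dyadic" "I \<subseteq> J" "dlen J = 2 ^ k * dlen I"
  shows "J = anc k I"
  using anc_unique[OF assms(1) assms(2-4)] anc_props[OF assms(1)] by blast

section \<open>Formal operators\<close>

lemma fpair_single: "fpair tau [(P,c)] S = sum_list (map (\<lambda>(J,v). tau P c J v) S)"
  by (simp add: fpair_def)

lemma fpair_split:
  assumes "formal_op tau" "P \<in> dyadic" "\<forall>(J,v)\<in>set S. J \<in> dyadic"
  shows "fpair tau [(P,c)] S = fpair tau [(dleft P,c)] S + fpair tau [(dright P,c)] S"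
  using assms(3)
proof (induction S)
  case Nil thus ?case by (simp add: fpair_def)
next
  case (Cons a S)
  obtain J v where a: "a = (J,v)" by fastforce
  have "J \<in> dyadic" using Cons.prems a by auto
  hence "tau P c J v = tau (dleft P) c J v + tau (dright P) c J v"
    using assms(1,2) unfolding formal_op_def by blast
  thus ?case using Cons unfolding fpair_single a by simp
qed

lemma fpair_zero:
  assumes "formal_op tau" "P \<in> dyadic" "\<forall>(J,v)\<in>set S. J \<in> dyadic"
  shows "fpair tau [(P,0)] S = 0"
  using assms(3)
proof (induction S)
  case Nil thus ?case by (simp add: fpair_def)
next
  case (Cons a S)
  obtain J v where a: "a = (J,v)" by fastforce
  have "J \<in> dyadic" using Cons.prems a by auto
  hence "tau P (1 *s 0 + 0) J v = 1 * tau P 0 J v + tau P 0 J v"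
    using assms(1,2) unfolding formal_op_def by blast
  hence "tau P 0 J v = 0" by simp
  thus ?case using Cons unfolding fpair_single a by simp
qed

lemma decomp_aux:
  assumes "formal_op tau" "\<forall>(J,v)\<in>set S. J \<in> dyadic" "I' \<in> dyadic"
  shows "\<And>P. P \<in> dyadic \<Longrightarrow> I' \<subseteq> P \<Longrightarrow> dlen P = 2^m * dlen I' \<Longrightarrow>
     (\<forall>K\<in>dyadic. K \<subseteq> P \<longrightarrow> K \<inter> I' = {} \<longrightarrow> dlen I' \<le> dlen K \<longrightarrow> fpair tau [(K,c)] S = 0) \<Longrightarrow>
     fpair tau [(P,c)] S = fpair tau [(I',c)] S"
proof (induction m)
  case 0
  hence "I' = P" using dyadic_eq assms(3) by simp
  thus ?case by simp
next
  case (Suc m)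
  have pos: "dlen I' > 0" using dlen_pos assms(3) by simp
  have gt: "1 < (2::real)^Suc m" by (rule one_less_power) simp_all
  have "1 * dlen I' < 2^Suc m * dlen I'" using gt pos by (rule mult_strict_right_mono)
  hence "I' \<noteq> P" using Suc.prems(3) by auto
  hence h: "I' \<subseteq> dleft P \<or> I' \<subseteq> dright P" using sub_half assms(3) Suc.prems by blast
  have len: "dlen (dleft P) = 2^m * dlen I'" "dlen (dright P) = 2^m * dlen I'"
    using dlen_halves[OF Suc.prems(1)] Suc.prems(3) by auto
  have ge: "dlen I' \<le> 2^m * dlen I'" using pos by simp
  have dy: "dleft P \<in> dyadic" "dright P \<in> dyadic" using Suc.prems(1) dleft_dyadic dright_dyadic by auto
  have sub: "dleft P \<subseteq> P" "dright P \<subseteq> P" using halves_sub Suc.prems(1) by auto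
  have split: "fpair tau [(P,c)] S = fpair tau [(dleft P,c)] S + fpair tau [(dright P,c)] S"
    using fpair_split assms Suc.prems(1) by blast
  from h show ?case
  proof
    assume a: "I' \<subseteq> dleft P"
    have "dright P \<inter> I' = {}" using a halves_disj by blast
    hence z: "fpair tau [(dright P,c)] S = 0" using Suc.prems(4) dy sub len ge by simp
    have "fpair tau [(dleft P,c)] S = fpair tau [(I',c)] S"
      using Suc.IH[OF dy(1) a len(1)] Suc.prems(4) sub by blast
    thus ?thesis using split z by simp
  next
    assume a: "I' \<subseteq> dright P"
    have "dleft P \<inter> I' = {}" using a halves_disj by blast
    hence z: "fpair tau [(dleft P,c)] S = 0" using Suc.prems(4) dy sub len ge by simp
    have "fpair tau [(dright P,c)] S = fpair tau [(I',c)] S"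
      using Suc.IH[OF dy(2) a len(2)] Suc.prems(4) sub by blast
    thus ?thesis using split z by simp
  qed
qed

lemma decomp:
  assumes "formal_op tau" "\<forall>(J,v)\<in>set S. J \<in> dyadic" "I' \<in> dyadic" "P \<in> dyadic" "I' \<subseteq> P"
    "\<forall>K\<in>dyadic. K \<subseteq> P \<longrightarrow> K \<inter> I' = {} \<longrightarrow> dlen I' \<le> dlen K \<longrightarrow> fpair tau [(K,c)] S = 0"
  shows "fpair tau [(P,c)] S = fpair tau [(I',c)] S"
proof -
  obtain m where "dlen P = 2^m * dlen I'" using exists_len assms by blast
  thus ?thesis using decomp_aux[OF assms(1-3)] assms(4-6) by blast
qed



section \<open>Linear algebra\<close>

lemma cinner_add_left: "cinner (x + y) z = cinner x z + cinner y z"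
  unfolding cinner_def by (simp add: algebra_simps sum.distrib)
lemma cinner_add_right: "cinner x (y + z) = cinner x y + cinner x z"
  unfolding cinner_def by (simp add: algebra_simps sum.distrib)
lemma cinner_scale_left: "cinner (c *s x) y = c * cinner x y"
  unfolding cinner_def by (simp add: sum_distrib_left mult.assoc)
lemma cinner_scale_right: "cinner x (c *s y) = cnj c * cinner x y"
  unfolding cinner_def by (simp add: sum_distrib_left mult_ac)
lemma cinner_zero_left[simp]: "cinner 0 y = 0"
  unfolding cinner_def by simp
lemma cinner_zero_right[simp]: "cinner x 0 = 0"
  unfolding cinner_def by simp
lemma cinner_cnj: "cnj (cinner x y) = cinner y x"
  unfolding cinner_def by (simp add: mult.commute)
lemma cinner_neg_left: "cinner (- x) y = - cinner x y"
  unfolding cinner_def by (simp add: sum_negf)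
lemma cinner_neg_right: "cinner x (- y) = - cinner x y"
  unfolding cinner_def by (simp add: sum_negf)

lemma mv_scale: "(A::complex^'n^'m) *v (c *s x) = c *s (A *v x)"
  by (simp add: vec_eq_iff matrix_vector_mult_def sum_distrib_left mult_ac)
lemma mv_neg: "(A::complex^'n^'m) *v (- x) = - (A *v x)"
  by (simp add: vec_eq_iff matrix_vector_mult_def sum_negf)

definition sa :: "complex^'n^'n \<Rightarrow> bool" where
  "sa M \<longleftrightarrow> (\<forall>x y. cinner (M *v x) y = cinner x (M *v y))"

lemma herm_sa: "hermitian A \<Longrightarrow> sa A"
proof -
  assume h: "hermitian A"
  have hc: "\<And>i j. cnj (A$j$i) = A$i$j" using h unfolding hermitian_def by (metis complex_cnj_cnj)
  { fix x y
    have "cinner (A *v x) y = (\<Sum>i\<in>UNIV. \<Sum>j\<in>UNIV. A$i$j * x$j * cnj (y$i))"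
      by (simp add: cinner_def matrix_vector_mult_def sum_distrib_right)
    also have "\<dots> = (\<Sum>j\<in>UNIV. \<Sum>i\<in>UNIV. A$i$j * x$j * cnj (y$i))"
      by (rule sum.swap)
    also have "\<dots> = (\<Sum>j\<in>UNIV. \<Sum>i\<in>UNIV. x$j * cnj (A$j$i) * cnj (y$i))"
      by (simp add: hc mult_ac)
    also have "\<dots> = cinner x (A *v y)"
      by (simp add: cinner_def matrix_vector_mult_def sum_distrib_left cnj_sum mult_ac)
    finally have "cinner (A *v x) y = cinner x (A *v y)" . }
  thus ?thesis unfolding sa_def by blast
qed

lemma sa_add: "sa A \<Longrightarrow> sa B \<Longrightarrow> sa (A + B)"
  unfolding sa_def by (simp add: matrix_vector_mult_add_rdistrib cinner_add_left cinner_add_right)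

lemma sa_sand: "sa A \<Longrightarrow> sa B \<Longrightarrow> sa (A ** B ** A)"
  unfolding sa_def by (simp add: matrix_vector_mul_assoc[symmetric])

lemma minv:
  fixes M :: "complex^'n^'n"
  assumes "invertible M"
  shows "M ** matrix_inv M = mat 1" "matrix_inv M ** M = mat 1"
proof -
  have "\<exists>A'. M ** A' = mat 1 \<and> A' ** M = mat 1" using assms unfolding invertible_def .
  hence "M ** matrix_inv M = mat 1 \<and> matrix_inv M ** M = mat 1"
    unfolding matrix_inv_def by (rule someI_ex)
  thus "M ** matrix_inv M = mat 1" "matrix_inv M ** M = mat 1" by auto
qed

lemma minv_v:
  fixes M :: "complex^'n^'n"
  assumes "invertible M"
  shows "M *v (matrix_inv M *v x) = x" "matrix_inv M *v (M *v x) = x"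
  using minv[OF assms] by (simp_all add: matrix_vector_mul_assoc)

lemma sa_inv: "sa M \<Longrightarrow> invertible M \<Longrightarrow> sa (matrix_inv M)"
proof -
  assume s: "sa M" and i: "invertible M"
  { fix x y
    have "cinner (matrix_inv M *v x) y = cinner (matrix_inv M *v x) (M *v (matrix_inv M *v y))"
      using minv_v[OF i] by simp
    also have "\<dots> = cinner (M *v (matrix_inv M *v x)) (matrix_inv M *v y)"
      using s unfolding sa_def by simp
    also have "\<dots> = cinner x (matrix_inv M *v y)" using minv_v[OF i] by simp
    finally have "cinner (matrix_inv M *v x) y = cinner x (matrix_inv M *v y)" . }
  thus ?thesis unfolding sa_def by blast
qed

lemma posdef_inv: "posdef (M::complex^'n^'n) \<Longrightarrow> invertible M"
proof -
  assume p: "posdef M"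
  have "\<forall>x. M *v x = 0 \<longrightarrow> x = 0"
  proof (intro allI impI)
    fix x assume z: "M *v x = 0"
    show "x = 0"
    proof (rule ccontr)
      assume "x \<noteq> 0"
      hence "Re (cinner (M *v x) x) > 0" using p unfolding posdef_def by blast
      thus False using z by simp
    qed
  qed
  thus ?thesis using matrix_left_invertible_ker invertible_left_inverse by blast
qed

lemma posdef_sa: "posdef M \<Longrightarrow> sa M"
  unfolding posdef_def using herm_sa by blast

lemma posdef_nonneg: "posdef M \<Longrightarrow> Re (cinner (M *v x) x) \<ge> 0"
  unfolding posdef_def by (cases "x = 0") (auto intro: less_imp_le)

locale haarstr =
  fixes Bp Bm :: "complex^'n^'n"
  assumes pp: "posdef Bp" and pm: "posdef Bm"
begin

definition "Ai = matrix_inv Bp"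
definition "A = Ai ** Bm"
definition "M = (Bm + Bp) ** Ai ** Bm"

lemma inv_Bp: "invertible Bp" using posdef_inv pp by blast

lemma H1: "Bp *v (A *v v) = Bm *v v"
  unfolding A_def Ai_def by (simp add: matrix_vector_mul_assoc[symmetric] minv_v[OF inv_Bp])

lemma Mv: "M *v v = Bm *v v + Bm *v (Ai *v (Bm *v v))"
  unfolding M_def Ai_def
  by (simp add: matrix_vector_mul_assoc[symmetric] matrix_vector_mult_add_rdistrib minv_v[OF inv_Bp])

lemma sa_Ai: "sa Ai" unfolding Ai_def using sa_inv posdef_sa pp inv_Bp by blast
lemma sa_Bm: "sa Bm" using posdef_sa pm by blast
lemma sa_Bp: "sa Bp" using posdef_sa pp by blast

lemma sa_M: "sa M"
  unfolding sa_def
proof (intro allI)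
  fix x y
  have "cinner (M *v x) y = cinner (Bm *v x) y + cinner (Bm *v (Ai *v (Bm *v x))) y"
    unfolding Mv cinner_add_left ..
  also have "\<dots> = cinner x (Bm *v y) + cinner (Ai *v (Bm *v x)) (Bm *v y)"
    using sa_Bm unfolding sa_def by simp
  also have "\<dots> = cinner x (Bm *v y) + cinner (Bm *v x) (Ai *v (Bm *v y))"
    using sa_Ai unfolding sa_def by simp
  also have "\<dots> = cinner x (Bm *v y) + cinner x (Bm *v (Ai *v (Bm *v y)))"
    using sa_Bm unfolding sa_def by simp
  also have "\<dots> = cinner x (M *v y)" unfolding Mv cinner_add_right ..
  finally show "cinner (M *v x) y = cinner x (M *v y)" .
qed

lemma H2: "cinner (Bp *v (A *v v')) (A *v v) + cinner (Bm *v v') v = cinner (M *v v') v"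
proof -
  have "cinner (Bp *v (A *v v')) (A *v v) = cinner (Bm *v v') (Ai *v (Bm *v v))"
    unfolding H1 unfolding A_def by (simp add: matrix_vector_mul_assoc[symmetric])
  also have "\<dots> = cinner (Ai *v (Bm *v v')) (Bm *v v)" using sa_Ai unfolding sa_def by simp
  also have "\<dots> = cinner (Bm *v (Ai *v (Bm *v v'))) v" using sa_Bm unfolding sa_def by simp
  finally show ?thesis unfolding Mv cinner_add_left by simp
qed

lemma H4: "v \<noteq> 0 \<Longrightarrow> Re (cinner (M *v v) v) > 0"
proof -
  assume v: "v \<noteq> 0"
  define y where "y = Bm *v v"
  define z where "z = Ai *v y"
  have "cinner (Bm *v (Ai *v (Bm *v v))) v = cinner (Ai *v y) y"
    unfolding y_def using sa_Bm unfolding sa_def by simp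
  also have "\<dots> = cinner z (Bp *v z)" unfolding z_def Ai_def using minv_v[OF inv_Bp] by simp
  also have "\<dots> = cnj (cinner (Bp *v z) z)" by (simp add: cinner_cnj)
  finally have e: "Re (cinner (Bm *v (Ai *v (Bm *v v))) v) = Re (cinner (Bp *v z) z)" by simp
  have "Re (cinner (Bp *v z) z) \<ge> 0" using posdef_nonneg pp by blast
  moreover have "Re (cinner (Bm *v v) v) > 0" using pm v unfolding posdef_def by blast
  ultimately show ?thesis unfolding Mv cinner_add_left using e by simp
qed

lemma eig_real:
  assumes "M *v v = c *s v" "cinner v v = 1"
  shows "c = complex_of_real (Re c)" "Re c > 0"
proof -
  have cv: "cinner (M *v v) v = c" using assms by (simp add: cinner_scale_left)
  have "cinner (M *v v) v = cinner v (M *v v)" using sa_M unfolding sa_def by blast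
  also have "\<dots> = cnj (cinner (M *v v) v)" by (simp add: cinner_cnj)
  finally have cc: "c = cnj c" using cv by simp
  have "Im c = Im (cnj c)" using cc by (rule arg_cong)
  hence "Im c = 0" by simp
  thus "c = complex_of_real (Re c)" by (simp add: complex_eq_iff)
  have "v \<noteq> 0" using assms(2) by auto
  hence "Re (cinner (M *v v) v) > 0" by (rule H4)
  thus "Re c > 0" using cv by simp
qed

end



section \<open>Integrals of step functions\<close>

lemma mw_int:
  assumes "matrix_weight B" "K \<in> sets lborel" "K \<subseteq> I" "I \<in> dyadic"
  shows "integrable lborel (\<lambda>x. indicator K x *\<^sub>R B x $ i $ j)"
proof -
  obtain a b where ab: "I \<subseteq> {a..b}" using dyadic_bounded assms(4) by blast
  have "set_integrable lborel {a..b} (\<lambda>x. B x $ i $ j)" using assms(1) unfolding matrix_weight_def by blast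
  hence "set_integrable lborel K (\<lambda>x. B x $ i $ j)"
    by (rule set_integrable_subset) (use assms(2,3) ab in auto)
  thus ?thesis unfolding set_integrable_def .
qed

lemma mint_entry: "mint B K $ i $ j = integral\<^sup>L lborel (\<lambda>x. indicator K x *\<^sub>R B x $ i $ j)"
  unfolding mint_def set_lebesgue_integral_def by simp

lemma hb_ci:
  assumes "matrix_weight B" "K \<in> sets lborel" "K \<subseteq> I" "I \<in> dyadic"
  shows "has_bochner_integral lborel (\<lambda>x. indicator K x *\<^sub>R cinner (B x *v e) v) (cinner (mint B K *v e) v)"
proof -
  have eq: "(\<lambda>x. indicator K x *\<^sub>R cinner (B x *v e) v) =
     (\<lambda>x. \<Sum>i\<in>UNIV. \<Sum>j\<in>UNIV. (indicator K x *\<^sub>R B x $ i $ j) * (e$j * cnj (v$i)))"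
    by (rule ext) (simp add: cinner_def matrix_vector_mult_def sum_distrib_right scaleR_sum_right
        mult_scaleR_left mult.assoc)
  have rhs: "cinner (mint B K *v e) v =
     (\<Sum>i\<in>UNIV. \<Sum>j\<in>UNIV. integral\<^sup>L lborel (\<lambda>x. indicator K x *\<^sub>R B x $ i $ j) * (e$j * cnj (v$i)))"
    by (simp add: cinner_def matrix_vector_mult_def mint_entry sum_distrib_right mult.assoc)
  show ?thesis unfolding eq rhs
    by (intro has_bochner_integral_sum has_bochner_integral_mult_left has_bochner_integral_integrable
        mw_int[OF assms])
qed

lemma hb_vi:
  assumes "matrix_weight B" "K \<in> sets lborel" "K \<subseteq> I" "I \<in> dyadic"
  shows "has_bochner_integral lborel (\<lambda>x. indicator K x *\<^sub>R (B x *v e) $ i) ((mint B K *v e) $ i)"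
proof -
  have eq: "(\<lambda>x. indicator K x *\<^sub>R (B x *v e) $ i) =
     (\<lambda>x. \<Sum>j\<in>UNIV. (indicator K x *\<^sub>R B x $ i $ j) * e$j)"
    by (rule ext) (simp add: matrix_vector_mult_def scaleR_sum_right mult_scaleR_left)
  have rhs: "(mint B K *v e) $ i =
     (\<Sum>j\<in>UNIV. integral\<^sup>L lborel (\<lambda>x. indicator K x *\<^sub>R B x $ i $ j) * e$j)"
    by (simp add: matrix_vector_mult_def mint_entry)
  show ?thesis unfolding eq rhs
    by (intro has_bochner_integral_sum has_bochner_integral_mult_left has_bochner_integral_integrable
        mw_int[OF assms])
qed

lemma step_nil[simp]: "step_fun [] x = 0"
  by (simp add: step_fun_def)
lemma step_cons: "step_fun ((I,e)#R) x = indicator I x *s e + step_fun R x"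
  by (simp add: step_fun_def)

lemma hb_l2_inner:
  assumes mw: "matrix_weight B" and I: "I \<in> dyadic" and S: "\<forall>(J,v)\<in>set S. J \<in> dyadic"
  shows "has_bochner_integral lborel (\<lambda>x. cinner (B x *v (indicator I x *s e)) (step_fun S x))
     (sum_list (map (\<lambda>(J,v). cinner (mint B (I \<inter> J) *v e) v) S))"
  using S
proof (induction S)
  case Nil thus ?case by (simp add: has_bochner_integral_zero)
next
  case (Cons a S)
  obtain J v where a: "a = (J,v)" by fastforce
  have J: "J \<in> dyadic" using Cons.prems a by auto
  have eqf: "\<And>x. cinner (B x *v (indicator I x *s e)) (step_fun ((J,v)#S) x) =
     indicator (I \<inter> J) x *\<^sub>R cinner (B x *v e) v + cinner (B x *v (indicator I x *s e)) (step_fun S x)"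
    by (case_tac "x \<in> I"; case_tac "x \<in> J")
      (simp_all add: step_cons cinner_add_right cinner_scale_right mv_scale cinner_scale_left)
  have A: "has_bochner_integral lborel (\<lambda>x. indicator (I \<inter> J) x *\<^sub>R cinner (B x *v e) v)
      (cinner (mint B (I \<inter> J) *v e) v)"
    by (rule hb_ci[OF mw _ _ I]) (use I J dyadic_sets in auto)
  have "has_bochner_integral lborel (\<lambda>x. indicator (I \<inter> J) x *\<^sub>R cinner (B x *v e) v +
      cinner (B x *v (indicator I x *s e)) (step_fun S x))
     (cinner (mint B (I \<inter> J) *v e) v + sum_list (map (\<lambda>(J,v). cinner (mint B (I \<inter> J) *v e) v) S))"
    using has_bochner_integral_add[OF A Cons.IH] Cons.prems by simp
  thus ?case unfolding a eqf by simp
qed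

lemma hb_l2:
  assumes mw: "matrix_weight B" and R: "\<forall>(I,e)\<in>set R. I \<in> dyadic" and S: "\<forall>(J,v)\<in>set S. J \<in> dyadic"
  shows "has_bochner_integral lborel (\<lambda>x. cinner (B x *v step_fun R x) (step_fun S x))
     (sum_list (map (\<lambda>(I,e). sum_list (map (\<lambda>(J,v). cinner (mint B (I \<inter> J) *v e) v) S)) R))"
  using R
proof (induction R)
  case Nil thus ?case by (simp add: has_bochner_integral_zero)
next
  case (Cons a R)
  obtain I e where a: "a = (I,e)" by fastforce
  have I: "I \<in> dyadic" using Cons.prems a by auto
  have eqf: "\<And>x. cinner (B x *v step_fun ((I,e)#R) x) (step_fun S x) =
     cinner (B x *v (indicator I x *s e)) (step_fun S x) + cinner (B x *v step_fun R x) (step_fun S x)"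
    by (simp add: step_cons matrix_vector_right_distrib cinner_add_left)
  have "has_bochner_integral lborel (\<lambda>x. cinner (B x *v (indicator I x *s e)) (step_fun S x) +
      cinner (B x *v step_fun R x) (step_fun S x))
     (sum_list (map (\<lambda>(J,v). cinner (mint B (I \<inter> J) *v e) v) S) +
      sum_list (map (\<lambda>(I,e). sum_list (map (\<lambda>(J,v). cinner (mint B (I \<inter> J) *v e) v) S)) R))"
    using has_bochner_integral_add[OF hb_l2_inner[OF mw I S] Cons.IH] Cons.prems by simp
  thus ?case unfolding a eqf by simp
qed

lemma l2ip_step:
  assumes "matrix_weight B" "\<forall>(I,e)\<in>set R. I \<in> dyadic" "\<forall>(J,v)\<in>set S. J \<in> dyadic"
  shows "l2ip B (step_fun R) (step_fun S) =
     sum_list (map (\<lambda>(I,e). sum_list (map (\<lambda>(J,v). cinner (mint B (I \<inter> J) *v e) v) S)) R)"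
  unfolding l2ip_def using has_bochner_integral_integral_eq[OF hb_l2[OF assms]] .

lemma hb_va:
  assumes mw: "matrix_weight B" and K: "K \<in> dyadic" and R: "\<forall>(I,e)\<in>set R. I \<in> dyadic"
  shows "has_bochner_integral lborel (\<lambda>x. indicator K x *\<^sub>R (B x *v step_fun R x) $ i)
     (sum_list (map (\<lambda>(I,e). (mint B (K \<inter> I) *v e) $ i) R))"
  using R
proof (induction R)
  case Nil thus ?case by (simp add: has_bochner_integral_zero)
next
  case (Cons a R)
  obtain I e where a: "a = (I,e)" by fastforce
  have I: "I \<in> dyadic" using Cons.prems a by auto
  have eqf: "\<And>x. indicator K x *\<^sub>R (B x *v step_fun ((I,e)#R) x) $ i =
     indicator (K \<inter> I) x *\<^sub>R (B x *v e) $ i + indicator K x *\<^sub>R (B x *v step_fun R x) $ i"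
    by (case_tac "x \<in> I"; case_tac "x \<in> K")
      (simp_all add: step_cons matrix_vector_right_distrib mv_scale)
  have A: "has_bochner_integral lborel (\<lambda>x. indicator (K \<inter> I) x *\<^sub>R (B x *v e) $ i)
      ((mint B (K \<inter> I) *v e) $ i)"
    by (rule hb_vi[OF mw _ _ K]) (use I K dyadic_sets in auto)
  have "has_bochner_integral lborel (\<lambda>x. indicator (K \<inter> I) x *\<^sub>R (B x *v e) $ i +
      indicator K x *\<^sub>R (B x *v step_fun R x) $ i)
     ((mint B (K \<inter> I) *v e) $ i + sum_list (map (\<lambda>(I,e). (mint B (K \<inter> I) *v e) $ i) R))"
    using has_bochner_integral_add[OF A Cons.IH] Cons.prems by simp
  thus ?case unfolding a eqf by simp
qed

lemma vavg_step:
  assumes "matrix_weight B" "K \<in> dyadic" "\<forall>(I,e)\<in>set R. I \<in> dyadic"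
  shows "vavg B (step_fun R) K =
    (\<chi> i. complex_of_real (1 / dlen K) * sum_list (map (\<lambda>(I,e). (mint B (K \<inter> I) *v e) $ i) R))"
  unfolding vavg_def set_lebesgue_integral_def
  using has_bochner_integral_integral_eq[OF hb_va[OF assms]] by simp

lemma mint_empty[simp]: "mint B {} = 0"
  unfolding mint_def set_lebesgue_integral_def by (simp add: vec_eq_iff)

lemma mint_split:
  assumes mw: "matrix_weight B" and J: "J \<in> dyadic"
  shows "mint B J = mint B (dleft J) + mint B (dright J)"
proof -
  have dy: "dleft J \<in> dyadic" "dright J \<in> dyadic" using J dleft_dyadic dright_dyadic by auto
  have sub: "dleft J \<subseteq> J" "dright J \<subseteq> J" using halves_sub J by auto
  { fix i j
    have ind: "\<And>x. indicator J x = (indicator (dleft J) x + indicator (dright J) x :: real)"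
    proof -
      fix x
      have "indicator (dleft J \<union> dright J) x = (indicator (dleft J) x + indicator (dright J) x :: real)"
        by (rule indicator_disj_union[OF halves_disj])
      thus "indicator J x = (indicator (dleft J) x + indicator (dright J) x :: real)"
        unfolding halves_union[OF J, symmetric] .
    qed
    have "mint B J $ i $ j = integral\<^sup>L lborel (\<lambda>x. indicator (dleft J) x *\<^sub>R B x $ i $ j +
        indicator (dright J) x *\<^sub>R B x $ i $ j)"
      unfolding mint_entry ind by (simp add: scaleR_add_left)
    also have "\<dots> = mint B (dleft J) $ i $ j + mint B (dright J) $ i $ j"
      unfolding mint_entry
      by (rule Bochner_Integration.integral_add; rule mw_int[OF mw _ _ J]) (use dy dyadic_sets sub in auto)
    finally have "mint B J $ i $ j = (mint B (dleft J) + mint B (dright J)) $ i $ j" by simp }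
  thus ?thesis by (simp add: vec_eq_iff)
qed

lemma mint_herm:
  assumes mw: "matrix_weight B" and K: "K \<in> sets lborel" "K \<subseteq> I" "I \<in> dyadic"
  shows "hermitian (mint B K)"
proof -
  have AEh: "AE x in lborel. hermitian (B x)"
    using mw unfolding matrix_weight_def posdef_def by auto
  { fix i j
    have i1: "integrable lborel (\<lambda>x. indicator K x *\<^sub>R B x $ i $ j)" by (rule mw_int[OF mw K])
    have i2: "integrable lborel (\<lambda>x. indicator K x *\<^sub>R B x $ j $ i)" by (rule mw_int[OF mw K])
    have i3: "integrable lborel (\<lambda>x. cnj (indicator K x *\<^sub>R B x $ j $ i))"
      using has_bochner_integral_cnj[OF has_bochner_integral_integrable[OF i2]] integrable.intros by blast
    have ae: "AE x in lborel. indicator K x *\<^sub>R B x $ i $ j = cnj (indicator K x *\<^sub>R B x $ j $ i)"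
      using AEh
    proof (rule eventually_mono)
      fix x assume "hermitian (B x)"
      hence "B x $ i $ j = cnj (B x $ j $ i)" unfolding hermitian_def by blast
      thus "indicator K x *\<^sub>R B x $ i $ j = cnj (indicator K x *\<^sub>R B x $ j $ i)" by simp
    qed
    have "mint B K $ i $ j = integral\<^sup>L lborel (\<lambda>x. cnj (indicator K x *\<^sub>R B x $ j $ i))"
      unfolding mint_entry
      by (rule integral_cong_AE[OF borel_measurable_integrable[OF i1] borel_measurable_integrable[OF i3] ae])
    also have "\<dots> = cnj (mint B K $ j $ i)" unfolding mint_entry by (rule Bochner_Integration.integral_cnj)
    finally have "mint B K $ i $ j = cnj (mint B K $ j $ i)" . }
  thus ?thesis unfolding hermitian_def by blast
qed

lemma mint_posdef:
  assumes mw: "matrix_weight B" and K: "K \<in> dyadic"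
  shows "posdef (mint B K)"
proof -
  have Ks: "K \<in> sets lborel" using K dyadic_sets by blast
  have AEp: "AE t in lborel. posdef (B t)" using mw unfolding matrix_weight_def by auto
  { fix x :: "complex^'a" assume x: "x \<noteq> 0"
    define g where "g t = indicator K t * Re (cinner (B t *v x) x)" for t
    have hb: "has_bochner_integral lborel (\<lambda>t. indicator K t *\<^sub>R cinner (B t *v x) x) (cinner (mint B K *v x) x)"
      by (rule hb_ci[OF mw Ks _ K]) simp
    have hg: "has_bochner_integral lborel g (Re (cinner (mint B K *v x) x))"
      using has_bochner_integral_Re[OF hb] unfolding g_def by simp
    have ig: "integrable lborel g" using hg integrable.intros by blast
    have nn: "AE t in lborel. 0 \<le> g t"
      using AEp by eventually_elim (use x in \<open>auto simp: g_def posdef_def indicator_def less_imp_le\<close>)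
    have "integral\<^sup>L lborel g \<noteq> 0"
    proof
      assume "integral\<^sup>L lborel g = 0"
      hence "AE t in lborel. g t = 0" using integral_nonneg_eq_0_iff_AE[OF ig nn] by simp
      hence "AE t in lborel. t \<notin> K" using AEp
        by eventually_elim (use x in \<open>auto simp: g_def posdef_def\<close>)
      hence "emeasure lborel K = 0" using AE_iff_measurable[OF Ks, of "\<lambda>t. t \<notin> K"] by simp
      hence "dlen K = 0" unfolding dlen_def measure_def by simp
      thus False using dlen_pos[OF K] by simp
    qed
    moreover have "integral\<^sup>L lborel g \<ge> 0" using integral_nonneg_AE[OF nn] .
    ultimately have "Re (cinner (mint B K *v x) x) > 0"
      using has_bochner_integral_integral_eq[OF hg] by simp }
  thus ?thesis unfolding posdef_def using mint_herm[OF mw Ks _ K] by blast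
qed

lemma mavg_mv: "mavg B K *v x = complex_of_real (1 / dlen K) *s (mint B K *v x)"
  by (simp add: vec_eq_iff mavg_def matrix_vector_mult_def sum_distrib_left mult_ac)

lemma mavg_posdef:
  assumes mw: "matrix_weight B" and K: "K \<in> dyadic"
  shows "posdef (mavg B K)"
proof -
  have p: "posdef (mint B K)" by (rule mint_posdef[OF mw K])
  have dp: "dlen K > 0" using dlen_pos K by blast
  have hh: "\<And>i j. mint B K $ i $ j = cnj (mint B K $ j $ i)" using p unfolding posdef_def hermitian_def by blast
  have h: "hermitian (mavg B K)" unfolding hermitian_def mavg_def
  proof (intro allI)
    fix i j
    show "(\<chi> i j. complex_of_real (1 / dlen K) * mint B K $ i $ j) $ i $ j =
      cnj ((\<chi> i j. complex_of_real (1 / dlen K) * mint B K $ i $ j) $ j $ i)"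
      by (simp only: vec_lambda_beta complex_cnj_mult complex_cnj_complex_of_real hh[of i j])
  qed
  { fix x :: "complex^'a" assume x: "x \<noteq> 0"
    have "Re (cinner (mavg B K *v x) x) = (1 / dlen K) * Re (cinner (mint B K *v x) x)"
      unfolding mavg_mv cinner_scale_left by simp
    moreover have "Re (cinner (mint B K *v x) x) > 0" using p x unfolding posdef_def by blast
    ultimately have "Re (cinner (mavg B K *v x) x) > 0" using dp by simp }
  thus ?thesis unfolding posdef_def using h by blast
qed



section \<open>Haar functions\<close>

lemma hr_dy: "J \<in> dyadic \<Longrightarrow> \<forall>(K,v)\<in>set (haar_rep W eb J j). K \<in> dyadic"
  by (simp add: haar_rep_def dleft_dyadic dright_dyadic)

definition "hp W eb J j = complex_of_real (1 / haar_norm W eb J j) *s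
                 ((matrix_inv (mint W (dright J)) ** mint W (dleft J)) *v eb J j)"
definition "hm W eb J j = complex_of_real (- 1 / haar_norm W eb J j) *s eb J j"

lemma haar_rep_eq: "haar_rep W eb J j = [(dright J, hp W eb J j), (dleft J, hm W eb J j)]"
  unfolding haar_rep_def hp_def hm_def ..

lemma hstr: "matrix_weight W \<Longrightarrow> J \<in> dyadic \<Longrightarrow> haarstr (mint W (dright J)) (mint W (dleft J))"
  unfolding haarstr_def using mint_posdef dleft_dyadic dright_dyadic by blast

lemma KZ:
  assumes mw: "matrix_weight W" and J: "J \<in> dyadic"
  shows "mint W (dright J) *v hp W eb J j + mint W (dleft J) *v hm W eb J j = 0"
proof -
  interpret haarstr "mint W (dright J)" "mint W (dleft J)" using hstr[OF mw J] .
  have "mint W (dright J) *v hp W eb J j = complex_of_real (1 / haar_norm W eb J j) *s (mint W (dleft J) *v eb J j)"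
    unfolding hp_def mv_scale using H1 unfolding A_def Ai_def by simp
  moreover have "mint W (dleft J) *v hm W eb J j = complex_of_real (- 1 / haar_norm W eb J j) *s (mint W (dleft J) *v eb J j)"
    unfolding hm_def mv_scale ..
  moreover have "complex_of_real (- 1 / haar_norm W eb J j) = - complex_of_real (1 / haar_norm W eb J j)" by simp
  ultimately show ?thesis by (simp add: vec_eq_iff)
qed

lemma int_sub: "A \<subseteq> B \<Longrightarrow> A \<inter> B = A" "A \<subseteq> B \<Longrightarrow> B \<inter> A = A" by auto

lemma disj_halves:
  assumes "J' \<in> dyadic" "J' \<inter> K = {}"
  shows "dright J' \<inter> K = {}" "dleft J' \<inter> K = {}" "K \<inter> dright J' = {}" "K \<inter> dleft J' = {}"
  using assms halves_sub[OF assms(1)] by auto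

lemma herm_mint_sa: "matrix_weight W \<Longrightarrow> K \<in> dyadic \<Longrightarrow> sa (mint W K)"
  using mint_posdef posdef_sa by blast

lemma orth_sub:
  assumes mw: "matrix_weight W" and J: "J \<in> dyadic" and J': "J' \<in> dyadic" and sub: "J' \<subseteq> J" "J' \<noteq> J"
  shows "l2ip W (haar W eb J' j') (haar W eb J j) = 0"
proof -
  have dy: "dleft J \<in> dyadic" "dright J \<in> dyadic" "dleft J' \<in> dyadic" "dright J' \<in> dyadic"
    using J J' dleft_dyadic dright_dyadic by auto
  have hs: "dleft J' \<subseteq> J'" "dright J' \<subseteq> J'" using halves_sub J' by auto
  have l: "l2ip W (haar W eb J' j') (haar W eb J j) =
     cinner (mint W (dright J' \<inter> dright J) *v hp W eb J' j') (hp W eb J j) +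
     cinner (mint W (dright J' \<inter> dleft J) *v hp W eb J' j') (hm W eb J j) +
    (cinner (mint W (dleft J' \<inter> dright J) *v hm W eb J' j') (hp W eb J j) +
     cinner (mint W (dleft J' \<inter> dleft J) *v hm W eb J' j') (hm W eb J j))"
    unfolding haar_def using l2ip_step[OF mw hr_dy[OF J'] hr_dy[OF J]]
    unfolding haar_rep_eq by simp
  have z: "mint W (dright J') *v hp W eb J' j' + mint W (dleft J') *v hm W eb J' j' = 0"
    by (rule KZ[OF mw J'])
  from sub_half[OF J' J sub] show ?thesis
  proof
    assume a: "J' \<subseteq> dleft J"
    have d: "J' \<inter> dright J = {}" using a halves_disj by blast
    have "l2ip W (haar W eb J' j') (haar W eb J j) =
       cinner (mint W (dright J') *v hp W eb J' j' + mint W (dleft J') *v hm W eb J' j') (hm W eb J j)"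
      unfolding l disj_halves[OF J' d] int_sub(1)[OF subset_trans[OF hs(1) a]]
        int_sub(1)[OF subset_trans[OF hs(2) a]] by (simp add: cinner_add_left)
    thus ?thesis unfolding z by simp
  next
    assume a: "J' \<subseteq> dright J"
    have d: "J' \<inter> dleft J = {}" using a halves_disj by blast
    have "l2ip W (haar W eb J' j') (haar W eb J j) =
       cinner (mint W (dright J') *v hp W eb J' j' + mint W (dleft J') *v hm W eb J' j') (hp W eb J j)"
      unfolding l disj_halves[OF J' d] int_sub(1)[OF subset_trans[OF hs(1) a]]
        int_sub(1)[OF subset_trans[OF hs(2) a]] by (simp add: cinner_add_left)
    thus ?thesis unfolding z by simp
  qed
qed

lemma orth_sup:
  assumes mw: "matrix_weight W" and J: "J \<in> dyadic" and J': "J' \<in> dyadic" and sub: "J \<subseteq> J'" "J \<noteq> J'"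
  shows "l2ip W (haar W eb J' j') (haar W eb J j) = 0"
proof -
  have dy: "dleft J \<in> dyadic" "dright J \<in> dyadic" "dleft J' \<in> dyadic" "dright J' \<in> dyadic"
    using J J' dleft_dyadic dright_dyadic by auto
  have hs: "dleft J \<subseteq> J" "dright J \<subseteq> J" using halves_sub J by auto
  have l: "l2ip W (haar W eb J' j') (haar W eb J j) =
     cinner (mint W (dright J' \<inter> dright J) *v hp W eb J' j') (hp W eb J j) +
     cinner (mint W (dright J' \<inter> dleft J) *v hp W eb J' j') (hm W eb J j) +
    (cinner (mint W (dleft J' \<inter> dright J) *v hm W eb J' j') (hp W eb J j) +
     cinner (mint W (dleft J' \<inter> dleft J) *v hm W eb J' j') (hm W eb J j))"
    unfolding haar_def using l2ip_step[OF mw hr_dy[OF J'] hr_dy[OF J]]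
    unfolding haar_rep_eq by simp
  have z: "mint W (dright J) *v hp W eb J j + mint W (dleft J) *v hm W eb J j = 0"
    by (rule KZ[OF mw J])
  have sp: "sa (mint W (dright J))" "sa (mint W (dleft J))" using herm_mint_sa[OF mw] dy by auto
  have key: "\<And>c. cinner (mint W (dright J) *v c) (hp W eb J j) + cinner (mint W (dleft J) *v c) (hm W eb J j) = 0"
  proof -
    fix c
    have "cinner (mint W (dright J) *v c) (hp W eb J j) + cinner (mint W (dleft J) *v c) (hm W eb J j)
       = cinner c (mint W (dright J) *v hp W eb J j + mint W (dleft J) *v hm W eb J j)"
      using sp unfolding sa_def by (simp add: cinner_add_right)
    thus "cinner (mint W (dright J) *v c) (hp W eb J j) + cinner (mint W (dleft J) *v c) (hm W eb J j) = 0"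
      unfolding z by simp
  qed
  from sub_half[OF J J' sub] show ?thesis
  proof
    assume a: "J \<subseteq> dleft J'"
    have d: "J \<inter> dright J' = {}" using a halves_disj by blast
    have "l2ip W (haar W eb J' j') (haar W eb J j) =
       cinner (mint W (dright J) *v hm W eb J' j') (hp W eb J j) + cinner (mint W (dleft J) *v hm W eb J' j') (hm W eb J j)"
      unfolding l disj_halves[OF J d] int_sub(2)[OF subset_trans[OF hs(1) a]]
        int_sub(2)[OF subset_trans[OF hs(2) a]] Int_commute[of "dright J'"] by simp
    thus ?thesis using key by simp
  next
    assume a: "J \<subseteq> dright J'"
    have d: "J \<inter> dleft J' = {}" using a halves_disj by blast
    have "l2ip W (haar W eb J' j') (haar W eb J j) =
       cinner (mint W (dright J) *v hp W eb J' j') (hp W eb J j) + cinner (mint W (dleft J) *v hp W eb J' j') (hm W eb J j)"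
      unfolding l disj_halves[OF J d] int_sub(2)[OF subset_trans[OF hs(1) a]]
        int_sub(2)[OF subset_trans[OF hs(2) a]] Int_commute[of "dleft J'"] by simp
    thus ?thesis using key by simp
  qed
qed

lemma orth_disj:
  assumes mw: "matrix_weight W" and J: "J \<in> dyadic" and J': "J' \<in> dyadic" and d: "J' \<inter> J = {}"
  shows "l2ip W (haar W eb J' j') (haar W eb J j) = 0"
proof -
  have d2: "dright J' \<inter> J = {}" "dleft J' \<inter> J = {}" using disj_halves[OF J' d] by auto
  have e: "dright J' \<inter> dright J = {}" "dright J' \<inter> dleft J = {}" "dleft J' \<inter> dright J = {}" "dleft J' \<inter> dleft J = {}"
    using d halves_sub[OF J] halves_sub[OF J'] by blast+
  show ?thesis
    unfolding haar_def using l2ip_step[OF mw hr_dy[OF J'] hr_dy[OF J]]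
    unfolding haar_rep_eq by (simp add: e)
qed

lemma orth_same:
  assumes mw: "matrix_weight W" and eb: "eigbasis W eb" and J: "J \<in> dyadic"
  shows "l2ip W (haar W eb J j') (haar W eb J j) = (if j' = j then 1 else 0)"
proof -
  interpret haarstr "mint W (dright J)" "mint W (dleft J)" using hstr[OF mw J] .
  have l: "l2ip W (haar W eb J j') (haar W eb J j) =
     cinner (mint W (dright J \<inter> dright J) *v hp W eb J j') (hp W eb J j) +
     cinner (mint W (dright J \<inter> dleft J) *v hp W eb J j') (hm W eb J j) +
    (cinner (mint W (dleft J \<inter> dright J) *v hm W eb J j') (hp W eb J j) +
     cinner (mint W (dleft J \<inter> dleft J) *v hm W eb J j') (hm W eb J j))"
    unfolding haar_def using l2ip_step[OF mw hr_dy[OF J] hr_dy[OF J]]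
    unfolding haar_rep_eq by simp
  have e: "dright J \<inter> dleft J = {}" "dleft J \<inter> dright J = {}" using halves_disj by auto
  have z0: "\<And>x y. cinner (mint W {} *v x) y = 0" by simp
  have l1: "l2ip W (haar W eb J j') (haar W eb J j) =
     cinner (mint W (dright J) *v hp W eb J j') (hp W eb J j) +
     cinner (mint W (dleft J) *v hm W eb J j') (hm W eb J j)"
    unfolding l e Int_absorb z0 by simp
  have hm_eq: "haar_mat W J = M"
    unfolding haar_mat_def M_def Ai_def mint_split[OF mw J] by (simp add: add.commute)
  define a' where "a' = 1 / haar_norm W eb J j'"
  define a where "a = 1 / haar_norm W eb J j"
  define v' where "v' = eb J j'"
  define v where "v = eb J j"
  have t1: "cinner (mint W (dright J) *v hp W eb J j') (hp W eb J j) =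
      complex_of_real a' * cnj (complex_of_real a) * cinner (mint W (dright J) *v (A *v v')) (A *v v)"
    unfolding hp_def a_def[symmetric] a'_def[symmetric] v_def[symmetric] v'_def[symmetric]
      Ai_def[symmetric] A_def[symmetric] mv_scale cinner_scale_left cinner_scale_right
    by (simp only: mult_ac)
  have t4: "cinner (mint W (dleft J) *v hm W eb J j') (hm W eb J j) =
      complex_of_real (- 1 / haar_norm W eb J j') * cnj (complex_of_real (- 1 / haar_norm W eb J j)) *
       cinner (mint W (dleft J) *v v') v"
    unfolding hm_def v_def[symmetric] v'_def[symmetric] mv_scale cinner_scale_left cinner_scale_right
    by (simp only: mult_ac)
  have aa: "(- 1 / haar_norm W eb J j') * (- 1 / haar_norm W eb J j) = a' * a"
    unfolding a_def a'_def by simp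
  have "l2ip W (haar W eb J j') (haar W eb J j) =
     complex_of_real (a' * a) * (cinner (mint W (dright J) *v (A *v v')) (A *v v) + cinner (mint W (dleft J) *v v') v)"
    unfolding l1 t1 t4 complex_cnj_complex_of_real of_real_mult[symmetric] aa by (simp only: distrib_left)
  also have "\<dots> = complex_of_real (a' * a) * cinner (M *v v') v" unfolding H2 ..
  finally have l2: "l2ip W (haar W eb J j') (haar W eb J j) = complex_of_real (a' * a) * cinner (M *v v') v" .
  have ebJ: "\<forall>i j. cinner (eb J i) (eb J j) = (if i = j then 1 else 0)"
     "\<forall>j. \<exists>c. haar_mat W J *v eb J j = c *s eb J j" using eb J unfolding eigbasis_def by auto
  obtain c' where c': "M *v v' = c' *s v'" using ebJ(2) hm_eq unfolding v'_def by metis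
  show ?thesis
  proof (cases "j' = j")
    case False
    have "cinner v' v = 0" using ebJ(1) False unfolding v_def v'_def by simp
    thus ?thesis unfolding l2 c' cinner_scale_left using False by simp
  next
    case True
    have vj: "v' = v" "a' = a" unfolding v'_def v_def a'_def a_def using True by simp_all
    have vv: "cinner v v = 1" using ebJ(1) unfolding v_def by simp
    have c: "M *v v = c' *s v" using c' vj by simp
    have cr: "c' = complex_of_real (Re c')" "Re c' > 0" using eig_real[OF c vv] by auto
    have hn: "haar_norm W eb J j = sqrt (Re c')"
      unfolding haar_norm_def hm_eq v_def[symmetric] c cinner_scale_left vv by simp
    have one: "a * a * Re c' = 1" unfolding a_def hn using cr(2)
      by (simp add: field_simps real_sqrt_mult[symmetric])
    have "l2ip W (haar W eb J j') (haar W eb J j) = complex_of_real (a * a) * c'"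
      unfolding l2 vj c cinner_scale_left vv by simp
    also have "\<dots> = complex_of_real (a * a * Re c')" by (subst cr(1)) (simp only: of_real_mult)
    finally show ?thesis using True one by simp
  qed
qed

lemma orthonormal:
  assumes mw: "matrix_weight W" and eb: "eigbasis W eb" and J: "J \<in> dyadic" and J': "J' \<in> dyadic"
  shows "l2ip W (haar W eb J' j') (haar W eb J j) = (if J' = J \<and> j' = j then 1 else 0)"
proof (cases "J' = J")
  case True thus ?thesis using orth_same[OF mw eb J] by simp
next
  case False
  show ?thesis
  proof (cases "J' \<inter> J = {}")
    case True thus ?thesis using orth_disj[OF mw J J' True] False by simp
  next
    case ne: False
    show ?thesis
    proof (cases "dlen J' \<le> dlen J")
      case True
      have "J' \<subseteq> J" by (rule dyadic_nest[OF J' J ne True])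
      thus ?thesis using orth_sub[OF mw J J' _ False] False by simp
    next
      case le: False
      have ne2: "J \<inter> J' \<noteq> {}" using ne by blast
      have "J \<subseteq> J'" by (rule dyadic_nest[OF J J' ne2]) (use le in simp)
      thus ?thesis using orth_sup[OF mw J J' _] False by auto
    qed
  qed
qed



lemma fadj_formal:
  assumes fo: "formal_op tau"
  shows "formal_op (fadj tau)"
  unfolding formal_op_def
proof (intro ballI)
  fix I J assume I: "I \<in> dyadic" and J: "J \<in> dyadic"
  have t: "(\<forall>a e e' v. tau J (a *s e + e') I v = a * tau J e I v + tau J e' I v) \<and>
     (\<forall>a e v v'. tau J e I (a *s v + v') = cnj a * tau J e I v + tau J e I v') \<and>
     (\<forall>e v. tau J e I v = tau (dleft J) e I v + tau (dright J) e I v) \<and>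
     (\<forall>e v. tau J e I v = tau J e (dleft I) v + tau J e (dright I) v)"
    using fo I J unfolding formal_op_def by blast
  have t1: "\<And>a e e' v. tau J (a *s e + e') I v = a * tau J e I v + tau J e' I v" using t by blast
  have t2: "\<And>a e v v'. tau J e I (a *s v + v') = cnj a * tau J e I v + tau J e I v'" using t by blast
  have t3: "\<And>e v. tau J e I v = tau (dleft J) e I v + tau (dright J) e I v" using t by blast
  have t4: "\<And>e v. tau J e I v = tau J e (dleft I) v + tau J e (dright I) v" using t by blast
  have c1: "\<forall>a e e' v. fadj tau I (a *s e + e') J v = a * fadj tau I e J v + fadj tau I e' J v"
    unfolding fadj_def by (simp add: t2)
  have c2: "\<forall>a e v v'. fadj tau I e J (a *s v + v') = cnj a * fadj tau I e J v + fadj tau I e J v'"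
    unfolding fadj_def by (simp add: t1)
  have c3: "\<forall>e v. fadj tau I e J v = fadj tau (dleft I) e J v + fadj tau (dright I) e J v"
  proof (intro allI)
    fix e v show "fadj tau I e J v = fadj tau (dleft I) e J v + fadj tau (dright I) e J v"
      unfolding fadj_def using t4[of v e] by simp
  qed
  have c4: "\<forall>e v. fadj tau I e J v = fadj tau I e (dleft J) v + fadj tau I e (dright J) v"
  proof (intro allI)
    fix e v show "fadj tau I e J v = fadj tau I e (dleft J) v + fadj tau I e (dright J) v"
      unfolding fadj_def using t3[of v e] by simp
  qed
  show "(\<forall>a e e' v. fadj tau I (a *s e + e') J v = a * fadj tau I e J v + fadj tau I e' J v) \<and>
         (\<forall>a e v v'. fadj tau I e J (a *s v + v') = cnj a * fadj tau I e J v + fadj tau I e J v') \<and>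
         (\<forall>e v. fadj tau I e J v = fadj tau (dleft I) e J v + fadj tau (dright I) e J v) \<and>
         (\<forall>e v. fadj tau I e J v = fadj tau I e (dleft J) v + fadj tau I e (dright J) v)"
    using c1 c2 c3 c4 by blast
qed

definition "eI A eb I i I' = (if I' \<subseteq> dright I then hp A eb I i else if I' \<subseteq> dleft I then hm A eb I i else 0)"

lemma wexp:
  assumes mw: "matrix_weight A" and I: "I \<in> dyadic" and I': "I' \<in> dyadic"
  shows "wexp_rep A I' (haar A eb I i) = [(I', eI A eb I i I')]"
proof -
  have vs: "vavg A (haar A eb I i) I' = (\<chi> k. complex_of_real (1 / dlen I') *
     ((mint A (I' \<inter> dright I) *v hp A eb I i) $ k + (mint A (I' \<inter> dleft I) *v hm A eb I i) $ k))"
    using vavg_step[OF mw I' hr_dy[OF I, of A eb i]] unfolding haar_def haar_rep_eq by simp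
  have inv: "invertible (mavg A I')" using posdef_inv mavg_posdef[OF mw I'] by blast
  have hd: "dright I \<inter> dleft I = {}" using halves_disj by blast
  have res: "matrix_inv (mavg A I') *v vavg A (haar A eb I i) I' = eI A eb I i I'"
  proof (cases "I' \<subseteq> dright I")
    case True
    have e: "I' \<inter> dright I = I'" "I' \<inter> dleft I = {}" using True hd by auto
    have "vavg A (haar A eb I i) I' = mavg A I' *v hp A eb I i"
      unfolding vs e mavg_mv by (simp add: vec_eq_iff)
    thus ?thesis unfolding eI_def using True minv_v(2)[OF inv] by simp
  next
    case nr: False
    show ?thesis
    proof (cases "I' \<subseteq> dleft I")
      case True
      have e: "I' \<inter> dleft I = I'" "I' \<inter> dright I = {}" using True hd by auto
      have "vavg A (haar A eb I i) I' = mavg A I' *v hm A eb I i"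
        unfolding vs e mavg_mv by (simp add: vec_eq_iff)
      thus ?thesis unfolding eI_def using True nr minv_v(2)[OF inv] by simp
    next
      case nl: False
      have "vavg A (haar A eb I i) I' = 0"
      proof (cases "I' \<inter> I = {}")
        case True
        have e: "I' \<inter> dleft I = {}" "I' \<inter> dright I = {}" using True halves_sub[OF I] by auto
        show ?thesis unfolding vs e by (simp add: vec_eq_iff)
      next
        case ne: False
        show ?thesis
        proof (cases "dlen I \<le> dlen I'")
          case True
          have "I \<subseteq> I'" by (rule dyadic_nest[OF I I' _ True]) (use ne in blast)
          hence e: "I' \<inter> dleft I = dleft I" "I' \<inter> dright I = dright I" using halves_sub[OF I] by auto
          have z: "mint A (dright I) *v hp A eb I i + mint A (dleft I) *v hm A eb I i = 0"
            by (rule KZ[OF mw I])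
          have "\<And>k. (mint A (dright I) *v hp A eb I i) $ k + (mint A (dleft I) *v hm A eb I i) $ k = 0"
            using z by (metis vector_add_component zero_index)
          thus ?thesis unfolding vs e by (simp add: vec_eq_iff)
        next
          case False
          have "I' \<subseteq> I" by (rule dyadic_nest[OF I' I ne]) (use False in simp)
          moreover have "I' \<noteq> I" using False by auto
          ultimately have "I' \<subseteq> dleft I \<or> I' \<subseteq> dright I" using sub_half[OF I' I] by blast
          thus ?thesis using nl nr by blast
        qed
      qed
      thus ?thesis unfolding eI_def using nl nr by simp
    qed
  qed
  show ?thesis unfolding wexp_rep_def res ..
qed

lemma para_formula:
  fixes ebB :: "real set \<Rightarrow> 'n \<Rightarrow> complex ^ 'n"
  assumes fo: "formal_op tau" and mwA: "matrix_weight A" and mwB: "matrix_weight B"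
    and ebB: "eigbasis B ebB" and I: "I \<in> dyadic" and J: "J \<in> dyadic"
  shows "para_pair r tau A B ebB (haar A ebA I i) J j =
     fpair tau [(anc r J, eI A ebA I i (anc r J))] (haar_rep B ebB J j)"
proof -
  define F where "F = (\<lambda>(I', j', J'). fpair tau (wexp_rep A I' (haar A ebA I i)) (haar_rep B ebB J' j') *
                            l2ip B (haar B ebB J' j') (haar B ebB J j))"
  define S :: "(real set \<times> 'n \<times> real set) set"
    where "S = {(I', j', J'). I' \<in> dyadic \<and> J' \<in> dyadic \<and> J' \<subseteq> I' \<and> dlen J' = dlen I' / 2 ^ r}"
  have pp: "para_pair r tau A B ebB (haar A ebA I i) J j = infsum F S"
    unfolding para_pair_def F_def S_def ..
  define x0 where "x0 = (anc r J, j, J)"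
  have ap: "anc r J \<in> dyadic" "J \<subseteq> anc r J" "dlen (anc r J) = 2 ^ r * dlen J"
    using anc_props[OF J] by auto
  have x0S: "x0 \<in> S" unfolding x0_def S_def using ap J by auto
  have zero: "F x = 0" if xS: "x \<in> S - {x0}" for x
  proof -
    obtain I' j' J' where x: "x = (I', j', J')" by (cases x) auto
    have m: "I' \<in> dyadic" "J' \<in> dyadic" "J' \<subseteq> I'" "dlen J' = dlen I' / 2 ^ r" using xS unfolding x S_def by auto
    have "\<not> (J' = J \<and> j' = j)"
    proof
      assume a: "J' = J \<and> j' = j"
      have "dlen I' = 2^r * dlen J" using m(4) a by simp
      hence "I' = anc r J" using anc_eq[OF J m(1)] m(3) a by blast
      thus False using xS a unfolding x x0_def by simp
    qed
    hence "l2ip B (haar B ebB J' j') (haar B ebB J j) = 0" using orthonormal[OF mwB ebB J m(2)] by simp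
    thus ?thesis unfolding x F_def by simp
  qed
  have "infsum F S = infsum F {x0}"
    by (rule infsum_cong_neutral) (use zero x0S in auto)
  also have "\<dots> = F x0" by simp
  also have "\<dots> = fpair tau [(anc r J, eI A ebA I i (anc r J))] (haar_rep B ebB J j)"
    unfolding F_def x0_def using orthonormal[OF mwB ebB J J] wexp[OF mwA I ap(1)] by simp
  finally show ?thesis using pp by simp
qed

lemma LT0:
  assumes "lower_tri r tau B ebB" "K \<in> dyadic" "J \<in> dyadic" "dlen J \<le> 2 * dlen K"
    "dlen J \<le> dlen K / 2 ^ r" "\<not> J \<subseteq> K"
  shows "fpair tau [(K,c)] (haar_rep B ebB J j) = 0"
  using assms unfolding lower_tri_def by blast

lemma fpair_haar: "fpair tau (haar_rep A eb I i) S =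
   fpair tau [(dright I, hp A eb I i)] S + fpair tau [(dleft I, hm A eb I i)] S"
  unfolding haar_rep_eq by (simp add: fpair_def)

lemma generic:
  assumes fo: "formal_op tau" and lt: "lower_tri r tau B ebB" and mwA: "matrix_weight A" and mwB: "matrix_weight B"
    and ebB: "eigbasis B ebB" and I: "I \<in> dyadic" and J: "J \<in> dyadic"
  shows "(dlen J \<ge> dlen I / 2 ^ r \<longrightarrow> para_pair r tau A B ebB (haar A ebA I i) J j = 0) \<and>
     (dlen J < dlen I / 2 ^ r \<longrightarrow>
        para_pair r tau A B ebB (haar A ebA I i) J j = fpair tau (haar_rep A ebA I i) (haar_rep B ebB J j) \<and>
        (\<not> J \<subseteq> I \<longrightarrow> para_pair r tau A B ebB (haar A ebA I i) J j = 0 \<and>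
           fpair tau (haar_rep A ebA I i) (haar_rep B ebB J j) = 0))"
proof -
  define I0 where "I0 = anc r J"
  have ap: "I0 \<in> dyadic" "J \<subseteq> I0" "dlen I0 = 2 ^ r * dlen J"
    using anc_props[OF J] unfolding I0_def by auto
  have PF: "para_pair r tau A B ebB (haar A ebA I i) J j = fpair tau [(I0, eI A ebA I i I0)] (haar_rep B ebB J j)"
    unfolding I0_def by (rule para_formula[OF fo mwA mwB ebB I J])
  have hJ: "\<forall>(K,v)\<in>set (haar_rep B ebB J j). K \<in> dyadic" by (rule hr_dy[OF J])
  have dJ: "dlen J > 0" using dlen_pos J by blast
  have dI: "dlen I > 0" using dlen_pos I by blast
  have p2: "(2::real)^r > 0" by simp
  have p1: "(1::real) \<le> 2^r" by simp
  have JI0: "dlen J \<le> dlen I0" unfolding ap(3) using mult_right_mono[OF p1 less_imp_le[OF dJ]] by simp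
  have hl: "dlen (dleft I) = dlen I / 2" "dlen (dright I) = dlen I / 2" using dlen_halves[OF I] by auto
  have hdy: "dleft I \<in> dyadic" "dright I \<in> dyadic" using I dleft_dyadic dright_dyadic by auto
  have hsub: "dleft I \<subseteq> I" "dright I \<subseteq> I" using halves_sub[OF I] by auto
  have Jne: "J \<noteq> {}" using dyadic_ne[OF J] .
  have c1: "para_pair r tau A B ebB (haar A ebA I i) J j = 0" if c: "dlen J \<ge> dlen I / 2 ^ r"
  proof -
    have "dlen I \<le> dlen J * 2^r" using c by (simp add: pos_divide_le_eq[OF p2])
    hence le: "dlen I \<le> dlen I0" unfolding ap(3) by (simp add: mult.commute)
    have "\<not> I0 \<subseteq> dright I"
    proof
      assume "I0 \<subseteq> dright I"
      hence "dlen I0 \<le> dlen (dright I)" using dlen_mono hdy dyadic_sets ap(1) by blast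
      thus False using le hl dI by simp
    qed
    moreover have "\<not> I0 \<subseteq> dleft I"
    proof
      assume "I0 \<subseteq> dleft I"
      hence "dlen I0 \<le> dlen (dleft I)" using dlen_mono hdy dyadic_sets ap(1) by blast
      thus False using le hl dI by simp
    qed
    ultimately have "eI A ebA I i I0 = 0" unfolding eI_def by simp
    thus ?thesis unfolding PF using fpair_zero[OF fo ap(1) hJ] by simp
  qed
  have c2: "para_pair r tau A B ebB (haar A ebA I i) J j = fpair tau (haar_rep A ebA I i) (haar_rep B ebB J j) \<and>
        (\<not> J \<subseteq> I \<longrightarrow> para_pair r tau A B ebB (haar A ebA I i) J j = 0 \<and>
           fpair tau (haar_rep A ebA I i) (haar_rep B ebB J j) = 0)" if c: "dlen J < dlen I / 2 ^ r"
  proof -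
    have "dlen J * 2^r < dlen I" using c by (simp add: pos_less_divide_eq[OF p2])
    hence lt0: "dlen I0 < dlen I" unfolding ap(3) by (simp add: mult.commute)
    hence "2 * dlen I0 \<le> dlen I" using dlen_lt2[OF I ap(1)] by blast
    hence hge: "dlen I0 \<le> dlen (dleft I)" "dlen I0 \<le> dlen (dright I)" using hl by auto
    have lowK: "fpair tau [(K,c)] (haar_rep B ebB J j) = 0"
      if K: "K \<in> dyadic" "dlen I0 \<le> dlen K" "\<not> J \<subseteq> K" for K c
    proof (rule LT0[OF lt K(1) J])
      show "dlen J \<le> 2 * dlen K" using JI0 K(2) dJ by simp
      have "dlen J * 2^r \<le> dlen K" using K(2) unfolding ap(3) by (simp add: mult.commute)
      thus "dlen J \<le> dlen K / 2 ^ r" by (simp add: pos_le_divide_eq[OF p2])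
      show "\<not> J \<subseteq> K" by (rule K(3))
    qed
    show ?thesis
    proof (cases "J \<subseteq> I")
      case False
      have n1: "\<not> J \<subseteq> dright I" "\<not> J \<subseteq> dleft I" using False hsub by auto
      have "\<not> I0 \<subseteq> dright I" "\<not> I0 \<subseteq> dleft I" using n1 ap(2) by auto
      hence "eI A ebA I i I0 = 0" unfolding eI_def by simp
      hence pz: "para_pair r tau A B ebB (haar A ebA I i) J j = 0"
        unfolding PF using fpair_zero[OF fo ap(1) hJ] by simp
      have fz: "fpair tau (haar_rep A ebA I i) (haar_rep B ebB J j) = 0"
        unfolding fpair_haar using lowK[OF hdy(2) hge(2) n1(1)] lowK[OF hdy(1) hge(1) n1(2)] by simp
      show ?thesis using pz fz False by simp
    next
      case True
      have ne: "I0 \<inter> I \<noteq> {}" using True ap(2) Jne by blast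
      have "I0 \<subseteq> I" by (rule dyadic_nest[OF ap(1) I ne]) (use lt0 in simp)
      moreover have "I0 \<noteq> I" using lt0 by auto
      ultimately have h: "I0 \<subseteq> dleft I \<or> I0 \<subseteq> dright I" using sub_half[OF ap(1) I] by blast
      have dec: "fpair tau [(H, c)] (haar_rep B ebB J j) = fpair tau [(I0, c)] (haar_rep B ebB J j)"
        if H: "H \<in> dyadic" "I0 \<subseteq> H" for H c
      proof (rule decomp[OF fo hJ ap(1) H])
        show "\<forall>K\<in>dyadic. K \<subseteq> H \<longrightarrow> K \<inter> I0 = {} \<longrightarrow> dlen I0 \<le> dlen K \<longrightarrow> fpair tau [(K, c)] (haar_rep B ebB J j) = 0"
        proof (intro ballI impI)
          fix K assume K: "K \<in> dyadic" "K \<inter> I0 = {}" "dlen I0 \<le> dlen K"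
          have "\<not> J \<subseteq> K" using K(2) ap(2) Jne by blast
          thus "fpair tau [(K, c)] (haar_rep B ebB J j) = 0" using lowK K by blast
        qed
      qed
      from h show ?thesis
      proof
        assume a: "I0 \<subseteq> dleft I"
        have nr: "\<not> I0 \<subseteq> dright I" using a halves_disj dyadic_ne[OF ap(1)] by blast
        have e: "eI A ebA I i I0 = hm A ebA I i" unfolding eI_def using a nr by simp
        have "\<not> J \<subseteq> dright I" using a ap(2) halves_disj Jne by blast
        hence z: "fpair tau [(dright I, hp A ebA I i)] (haar_rep B ebB J j) = 0"
          using lowK[OF hdy(2) hge(2)] by blast
        show ?thesis unfolding PF e fpair_haar z dec[OF hdy(1) a] using True by simp
      next
        assume a: "I0 \<subseteq> dright I"
        have e: "eI A ebA I i I0 = hp A ebA I i" unfolding eI_def using a by simp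
        have "\<not> J \<subseteq> dleft I" using a ap(2) halves_disj Jne by blast
        hence z: "fpair tau [(dleft I, hm A ebA I i)] (haar_rep B ebB J j) = 0"
          using lowK[OF hdy(1) hge(1)] by blast
        show ?thesis unfolding PF e fpair_haar z dec[OF hdy(2) a] using True by simp
      qed
    qed
  qed
  show ?thesis using c1 c2 by blast
qed

theorem lemma5p1:
  fixes W V :: "real \<Rightarrow> complex ^ 'n ^ 'n"
    and ebW ebV :: "real set \<Rightarrow> 'n \<Rightarrow> complex ^ 'n"
    and tau :: "real set \<Rightarrow> complex ^ 'n \<Rightarrow> real set \<Rightarrow> complex ^ 'n \<Rightarrow> complex"
    and r :: nat and I J :: "real set" and i j :: 'n
  assumes "matrix_weight W" and "matrix_weight V"
    and "eigbasis W ebW" and "eigbasis V ebV"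
    and "formal_op tau"
    and "well_localized r tau W ebW V ebV"
    and "I \<in> dyadic" and "J \<in> dyadic"
  shows
    "(dlen J \<ge> dlen I / 2 ^ r \<longrightarrow>
        para_pair r tau W V ebV (haar W ebW I i) J j = 0) \<and>
     (dlen J < dlen I / 2 ^ r \<longrightarrow>
        para_pair r tau W V ebV (haar W ebW I i) J j
          = fpair tau (haar_rep W ebW I i) (haar_rep V ebV J j) \<and>
        (\<not> J \<subseteq> I \<longrightarrow>
          para_pair r tau W V ebV (haar W ebW I i) J j = 0 \<and>
          fpair tau (haar_rep W ebW I i) (haar_rep V ebV J j) = 0)) \<and>
     (dlen J \<ge> dlen I / 2 ^ r \<longrightarrow>
        para_pair r (fadj tau) V W ebW (haar V ebV I i) J j = 0) \<and>
     (dlen J < dlen I / 2 ^ r \<longrightarrow>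
        para_pair r (fadj tau) V W ebW (haar V ebV I i) J j
          = fpair (fadj tau) (haar_rep V ebV I i) (haar_rep W ebW J j) \<and>
        (\<not> J \<subseteq> I \<longrightarrow>
          para_pair r (fadj tau) V W ebW (haar V ebV I i) J j = 0 \<and>
          fpair (fadj tau) (haar_rep V ebV I i) (haar_rep W ebW J j) = 0))"
proof -
  have l1: "lower_tri r tau V ebV" and l2: "lower_tri r (fadj tau) W ebW"
    using assms(6) unfolding well_localized_def by auto
  note g1 = generic[OF assms(5) l1 assms(1) assms(2) assms(4) assms(7) assms(8), of ebW i j]
  note g2 = generic[OF fadj_formal[OF assms(5)] l2 assms(2) assms(1) assms(3) assms(7) assms(8), of ebV i j]
  show ?thesis using g1 g2 by blast
qed


end
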